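(* Let $\rho_0,\rho_1\in\mathcal{P}(\mathbb{R}^n)\cap L^\infty(\mathbb{R}^n)$ be radially decreasing and compactly supported, and let $\{\rho_t\}_{t\in[0,1]}$ be the height-function interpolation curve between them. Then: (a) writing $\mathrm{supp}\,\rho_i=B_{R_i}$ for $i=0,1$, for all $t\in(0,1)$ one has $\mathrm{supp}\,\rho_t=B_{R_t}$ with $R_t=((1-t)R_0^{-n}+tR_1^{-n})^{-1/n}$; in particular $R_t\le\max\{R_0,R_1\}$ for $t\in[0,1]$; (b) if $\rho_0,\rho_1$ are both strictly radially decreasing within their supports, then so is $\rho_t$ for every $t\in(0,1)$; (c) if $\rho_0,\rho_1\in C(\mathbb{R}^n)$, then $\rho_t\in C(\mathbb{R}^n)$ for every $t\in(0,1)$.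
   Context: Radially decreasing = radially symmetric about the origin and nonincreasing in $|x|$; $B_R=B(0,R)$. Height function of such $\rho$: $h:(0,1)\to(0,\|\rho\|_\infty)$ with $\int\min\{\rho(x),h(s)\}dx=s$. Interpolation curve: $h_t=(1-t)h_0+th_1$ and $\rho_t(x)=\int_0^1\chi_{(c_nh_t'(s))^{-1/n}}(x)\,h_t'(s)\,ds$ with $c_n$ the volume of the unit ball and $\chi_r=1_{B(0,r)}$. *)

theory Defs
  imports "HOL-Analysis.Analysis"
begin

definition radially_decreasing :: "('a::euclidean_space \<Rightarrow> real) \<Rightarrow> bool" where
  "radially_decreasing \<rho> \<longleftrightarrow>
     (\<forall>x y. norm x = norm y \<longrightarrow> \<rho> x = \<rho> y) \<and>
     (\<forall>x y. norm x \<le> norm y \<longrightarrow> \<rho> y \<le> \<rho> x)"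

definition supp :: "('a::euclidean_space \<Rightarrow> real) \<Rightarrow> 'a set" where
  "supp \<rho> = closure {x. \<rho> x \<noteq> 0}"

definition strictly_radially_decreasing_on_supp :: "('a::euclidean_space \<Rightarrow> real) \<Rightarrow> bool" where
  "strictly_radially_decreasing_on_supp \<rho> \<longleftrightarrow>
     (\<forall>x y. norm x < norm y \<longrightarrow> y \<in> supp \<rho> \<longrightarrow> \<rho> y < \<rho> x)"

definition prob_density :: "('a::euclidean_space \<Rightarrow> real) \<Rightarrow> bool" where
  "prob_density \<rho> \<longleftrightarrow> (\<forall>x. 0 \<le> \<rho> x) \<and> integrable lborel \<rho> \<and> (LINT x|lborel. \<rho> x) = 1"

definition ess_bounded :: "('a::euclidean_space \<Rightarrow> real) \<Rightarrow> bool" where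
  "ess_bounded \<rho> \<longleftrightarrow> (\<exists>M. AE x in lborel. \<bar>\<rho> x\<bar> \<le> M)"

definition height :: "('a::euclidean_space \<Rightarrow> real) \<Rightarrow> real \<Rightarrow> real" where
  "height \<rho> s = (THE l. 0 < l \<and> (LINT x|lborel. min (\<rho> x) l) = s)"

definition interp_curve ::
  "('a::euclidean_space \<Rightarrow> real) \<Rightarrow> ('a \<Rightarrow> real) \<Rightarrow> real \<Rightarrow> 'a \<Rightarrow> real" where
  "interp_curve \<rho>0 \<rho>1 t x =
     (let ht = (\<lambda>s. (1 - t) * height \<rho>0 s + t * height \<rho>1 s);
          cn = measure lborel (ball 0 1 :: 'a set);
          n = real DIM('a)
      in LINT s:{0<..<1}|lborel.
           indicator (ball (0::'a) ((cn * deriv ht s) powr (-1 / n))) x * deriv ht s)"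

end

theory Submission
  imports Defs "HOL-Probability.Distribution_Functions"
begin


definition mlev :: "('a::euclidean_space \<Rightarrow> real) \<Rightarrow> real \<Rightarrow> real" where
  "mlev \<rho> l = measure lborel {x. l < \<rho> x}"

definition Fint :: "('a::euclidean_space \<Rightarrow> real) \<Rightarrow> real \<Rightarrow> real" where
  "Fint \<rho> l = (LINT x|lborel. min (\<rho> x) l)"

context
  fixes \<rho> :: "'a::euclidean_space \<Rightarrow> real" and R :: real
  assumes nn: "\<And>x. 0 \<le> \<rho> x" and int: "integrable lborel \<rho>" and one: "(LINT x|lborel. \<rho> x) = 1"
    and rd: "radially_decreasing \<rho>" and sR: "supp \<rho> = cball 0 R"
begin

lemma rho_meas[measurable]: "\<rho> \<in> borel_measurable lborel"
  using int by auto

lemma rho_anti: "norm x \<le> norm y \<Longrightarrow> \<rho> y \<le> \<rho> x"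
proof -
  assume a: "norm x \<le> norm y"
  from rd have H: "\<forall>x y. norm x \<le> norm y \<longrightarrow> \<rho> y \<le> \<rho> x"
    unfolding radially_decreasing_def by (rule conjunct2)
  from H[rule_format, OF a] show ?thesis .
qed

lemma rho_le0: "\<rho> x \<le> \<rho> 0"
  by (rule rho_anti) simp

lemma rho_out: "R < norm x \<Longrightarrow> \<rho> x = 0"
proof (rule ccontr)
  assume "R < norm x" "\<rho> x \<noteq> 0"
  then have "x \<in> {x. \<rho> x \<noteq> 0}" by simp
  then have "x \<in> supp \<rho>" unfolding supp_def by (rule subsetD[OF closure_subset])
  then have "x \<in> cball 0 R" using sR by simp
  then show False using \<open>R < norm x\<close> by simp
qed

lemma pos_sub: "{x. l < \<rho> x} \<subseteq> cball 0 R" if "0 \<le> l"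
proof
  fix x assume "x \<in> {x. l < \<rho> x}"
  then show "x \<in> cball 0 R" using rho_out[of x] that by (cases "R < norm x") auto
qed

lemma R_pos: "0 < R"
proof (rule ccontr)
  assume "\<not> 0 < R"
  then have "\<rho> x = 0" if "x \<noteq> 0" for x
  proof -
    have "0 < norm x" using that by simp
    then have "R < norm x" using \<open>\<not> 0 < R\<close> by linarith
    then show ?thesis by (rule rho_out)
  qed
  then have "AE x in lborel. \<rho> x = 0"
    by (intro AE_I'[of "{0}"]) auto
  then have "(LINT x|lborel. \<rho> x) = 0"
    by (simp add: integral_eq_zero_AE)
  with one show False by simp
qed

lemma ball_pos: "norm x < R \<Longrightarrow> 0 < \<rho> x"
proof -
  assume x: "norm x < R"
  obtain w :: 'a where w: "norm w = R" using vector_choose_size[of R] R_pos by auto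
  have "w \<in> closure {x. \<rho> x \<noteq> 0}" using sR w unfolding supp_def by auto
  then have "\<exists>y\<in>{x. \<rho> x \<noteq> 0}. dist y w < R - norm x"
    using x unfolding closure_approachable by simp
  then obtain y where y: "\<rho> y \<noteq> 0" "dist y w < R - norm x" by auto
  have "norm w \<le> norm y + dist y w"
    using norm_triangle_sub[of w y] by (simp add: dist_norm norm_minus_commute)
  then have "norm x \<le> norm y" using y w by linarith
  then have "\<rho> y \<le> \<rho> x" by (rule rho_anti)
  with y nn[of y] show ?thesis by linarith
qed

lemma cball_meas: "measure lborel (cball (0::'a) r) = unit_ball_vol DIM('a) * r ^ DIM('a)" if "0 \<le> r"
  by (rule content_cball[OF that])

lemma ball_meas: "measure lborel (ball (0::'a) r) = unit_ball_vol DIM('a) * r ^ DIM('a)" if "0 \<le> r"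
  by (rule content_ball[OF that])


lemma lev_sets[measurable]: "{x. l < \<rho> x} \<in> sets lborel"
  by measurable

lemma cball_fmeas: "cball (0::'a) R \<in> fmeasurable lborel"
  by (rule fmeasurable_compact) simp

lemma lev_fmeas: "0 \<le> l \<Longrightarrow> {x. l < \<rho> x} \<in> fmeasurable lborel"
  by (rule fmeasurableI2[OF cball_fmeas pos_sub]) auto

lemma m_le: "0 \<le> l \<Longrightarrow> mlev \<rho> l \<le> unit_ball_vol DIM('a) * R ^ DIM('a)"
  unfolding mlev_def using measure_mono_fmeasurable[OF pos_sub lev_sets cball_fmeas] cball_meas R_pos
  by simp

lemma m_nonneg: "0 \<le> mlev \<rho> l"
  unfolding mlev_def by (rule measure_nonneg)

lemma m_anti: "0 \<le> l \<Longrightarrow> l \<le> l' \<Longrightarrow> mlev \<rho> l' \<le> mlev \<rho> l"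
  unfolding mlev_def
  by (rule measure_mono_fmeasurable[OF _ lev_sets lev_fmeas]) auto

lemma m_0: "mlev \<rho> 0 = unit_ball_vol DIM('a) * R ^ DIM('a)"
proof (rule antisym)
  show "mlev \<rho> 0 \<le> unit_ball_vol DIM('a) * R ^ DIM('a)" by (rule m_le) simp
  have "ball 0 R \<subseteq> {x. 0 < \<rho> x}" using ball_pos by auto
  then have "measure lborel (ball (0::'a) R) \<le> mlev \<rho> 0"
    unfolding mlev_def by (rule measure_mono_fmeasurable) (auto intro: lev_fmeas)
  then show "unit_ball_vol DIM('a) * R ^ DIM('a) \<le> mlev \<rho> 0"
    using ball_meas R_pos by simp
qed

lemma min_int: "0 \<le> l \<Longrightarrow> integrable lborel (\<lambda>x. min (\<rho> x) l)"
  by (rule Bochner_Integration.integrable_bound[OF int]) (auto simp: nn)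

lemma F_0: "Fint \<rho> 0 = 0"
proof -
  have "(\<lambda>x. min (\<rho> x) 0) = (\<lambda>x. 0)"
  proof (intro ext)
    fix x show "min (\<rho> x) 0 = 0" using nn[of x] by (simp add: min_def)
  qed
  then show ?thesis unfolding Fint_def by simp
qed

lemma F_top: "\<rho> 0 \<le> l \<Longrightarrow> Fint \<rho> l = 1"
proof -
  assume "\<rho> 0 \<le> l"
  then have "(\<lambda>x. min (\<rho> x) l) = \<rho>" using rho_le0 by (intro ext) (simp add: min_def, meson order_trans)
  then show ?thesis unfolding Fint_def using one by simp
qed

lemma F_le1: "0 \<le> l \<Longrightarrow> Fint \<rho> l \<le> 1"
  unfolding Fint_def using one integral_mono[OF min_int int, of l] by simp

lemma F_mono: "0 \<le> l \<Longrightarrow> l \<le> l' \<Longrightarrow> Fint \<rho> l \<le> Fint \<rho> l'"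
  unfolding Fint_def by (rule integral_mono[OF min_int min_int]) auto

lemma F_diff_upper:
  assumes "0 \<le> l" "l \<le> l'"
  shows "Fint \<rho> l' - Fint \<rho> l \<le> (l' - l) * mlev \<rho> l"
proof -
  have ii: "integrable lborel (indicator {x. l < \<rho> x} :: 'a \<Rightarrow> real)"
    using lev_fmeas[OF assms(1)] by (simp add: fmeasurable_def)
  have "Fint \<rho> l' - Fint \<rho> l = (LINT x|lborel. min (\<rho> x) l' - min (\<rho> x) l)"
    unfolding Fint_def using min_int assms by (subst Bochner_Integration.integral_diff) auto
  also have "\<dots> \<le> (LINT x|lborel. (l' - l) * indicator {x. l < \<rho> x} x)"
    using assms by (intro integral_mono Bochner_Integration.integrable_diff min_int integrable_mult_right ii)
      (auto simp: indicator_def min_def)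
  also have "\<dots> = (l' - l) * mlev \<rho> l"
    unfolding mlev_def by simp
  finally show ?thesis .
qed

lemma F_lip:
  assumes "0 \<le> l" "0 \<le> l'"
  shows "\<bar>Fint \<rho> l' - Fint \<rho> l\<bar> \<le> \<bar>l' - l\<bar> * (unit_ball_vol DIM('a) * R ^ DIM('a))"
proof -
  have *: "\<bar>Fint \<rho> b - Fint \<rho> a\<bar> \<le> \<bar>b - a\<bar> * (unit_ball_vol DIM('a) * R ^ DIM('a))"
    if "0 \<le> a" "a \<le> b" for a b
  proof -
    have "Fint \<rho> b - Fint \<rho> a \<le> (b - a) * mlev \<rho> a" by (rule F_diff_upper) fact+
    also have "\<dots> \<le> (b - a) * (unit_ball_vol DIM('a) * R ^ DIM('a))"
      using m_le[OF that(1)] that by (intro mult_left_mono) auto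
    finally show ?thesis using F_mono[OF that] that by simp
  qed
  show ?thesis
  proof (cases "l \<le> l'")
    case True then show ?thesis using *[of l l'] assms by simp
  next
    case False then show ?thesis using *[of l' l] assms by (simp add: abs_minus_commute)
  qed
qed

lemma F_cont: "continuous_on {0..} (Fint \<rho>)"
proof (rule lipschitz_on_continuous_on)
  show "(unit_ball_vol DIM('a) * R ^ DIM('a))-lipschitz_on {0..} (Fint \<rho>)"
  proof (rule lipschitz_onI)
    fix x y :: real assume "x \<in> {0..}" "y \<in> {0..}"
    then show "dist (Fint \<rho> x) (Fint \<rho> y) \<le> unit_ball_vol DIM('a) * R ^ DIM('a) * dist x y"
      using F_lip[of y x] by (simp add: dist_real_def mult.commute)
  next
    show "0 \<le> unit_ball_vol DIM('a) * R ^ DIM('a)" using R_pos by simp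
  qed
qed

lemma F_isCont: "0 < l \<Longrightarrow> isCont (Fint \<rho>) l"
  using continuous_on_interior[OF F_cont, of l] by simp

lemma F_one_AE: "0 \<le> l \<Longrightarrow> Fint \<rho> l = 1 \<Longrightarrow> AE x in lborel. \<rho> x \<le> l"
proof -
  assume l: "0 \<le> l" and F1: "Fint \<rho> l = 1"
  have "(LINT x|lborel. \<rho> x - min (\<rho> x) l) = 0"
    using F1 one min_int[OF l] int unfolding Fint_def by (subst Bochner_Integration.integral_diff) auto
  then have "AE x in lborel. \<rho> x - min (\<rho> x) l = 0"
    using min_int[OF l] int by (subst (asm) integral_nonneg_eq_0_iff_AE) auto
  then show ?thesis by eventually_elim (simp add: min_def split: if_splits)
qed

lemma AE_F_one: "AE x in lborel. \<rho> x \<le> l \<Longrightarrow> Fint \<rho> l = 1"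
proof -
  assume "AE x in lborel. \<rho> x \<le> l"
  then have "AE x in lborel. min (\<rho> x) l = \<rho> x" by eventually_elim simp
  then have "Fint \<rho> l = (LINT x|lborel. \<rho> x)"
    unfolding Fint_def by (intro integral_cong_AE) auto
  with one show ?thesis by simp
qed

lemma F_lt1_iff: "0 \<le> l \<Longrightarrow> Fint \<rho> l < 1 \<longleftrightarrow> 0 < mlev \<rho> l"
proof
  assume l: "0 \<le> l" and F: "Fint \<rho> l < 1"
  show "0 < mlev \<rho> l"
  proof (rule ccontr)
    assume "\<not> 0 < mlev \<rho> l"
    then have "mlev \<rho> l = 0" using m_nonneg[of l] by linarith
    then have "emeasure lborel {x. l < \<rho> x} = 0"
      using emeasure_eq_measure2[OF lev_fmeas[OF l]] unfolding mlev_def by simp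
    then have "AE x in lborel. \<rho> x \<le> l"
      by (intro AE_I'[of "{x. l < \<rho> x}"]) auto
    then have "Fint \<rho> l = 1" by (rule AE_F_one)
    with F show False by simp
  qed
next
  assume l: "0 \<le> l" and m: "0 < mlev \<rho> l"
  show "Fint \<rho> l < 1"
  proof (rule ccontr)
    assume "\<not> Fint \<rho> l < 1"
    then have "Fint \<rho> l = 1" using F_le1[OF l] by linarith
    then have "AE x in lborel. \<rho> x \<le> l" using F_one_AE l by blast
    then have "emeasure lborel {x. l < \<rho> x} = 0"
      by (subst AE_iff_measurable[symmetric, where P="\<lambda>x. \<rho> x \<le> l"]) (auto simp: not_le)
    then have "mlev \<rho> l = 0" unfolding mlev_def by (simp add: measure_def)
    with m show False by simp
  qed
qed

lemma F_strict:
  assumes l: "0 \<le> l" "l < l'" and F: "Fint \<rho> l < 1"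
  shows "Fint \<rho> l < Fint \<rho> l'"
proof (rule ccontr)
  assume "\<not> Fint \<rho> l < Fint \<rho> l'"
  then have eq: "Fint \<rho> l' = Fint \<rho> l" using F_mono[of l l'] l by linarith
  have l': "0 \<le> l'" using l by linarith
  have "(LINT x|lborel. min (\<rho> x) l' - min (\<rho> x) l) = 0"
    using eq min_int[OF l(1)] min_int[OF l'] unfolding Fint_def by (subst Bochner_Integration.integral_diff) auto
  then have "AE x in lborel. min (\<rho> x) l' - min (\<rho> x) l = 0"
    using min_int[OF l(1)] min_int[OF l'] l by (subst (asm) integral_nonneg_eq_0_iff_AE) auto
  then have "AE x in lborel. \<rho> x \<le> l"
    by eventually_elim (use l in \<open>auto simp: min_def split: if_splits\<close>)
  then have "Fint \<rho> l = 1" by (rule AE_F_one)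
  with F show False by simp
qed

lemma F_pos: "0 < l \<Longrightarrow> 0 < Fint \<rho> l"
  using F_strict[of 0 l] F_0 by simp


lemma h_ex1: "0 < s \<Longrightarrow> s < 1 \<Longrightarrow> \<exists>!l. 0 < l \<and> Fint \<rho> l = s"
proof -
  assume s: "0 < s" "s < 1"
  have r0: "0 \<le> \<rho> 0" by (rule nn)
  have "continuous_on {0..\<rho> 0} (Fint \<rho>)"
    by (rule continuous_on_subset[OF F_cont]) auto
  then obtain l where l: "0 \<le> l" "l \<le> \<rho> 0" "Fint \<rho> l = s"
    using IVT'[of "Fint \<rho>" 0 s "\<rho> 0"] F_0 F_top[of "\<rho> 0"] s r0 by auto
  have "l \<noteq> 0" using l F_0 s by auto
  with l have lp: "0 < l" by simp
  show ?thesis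
  proof (rule ex1I[of _ l])
    show "0 < l \<and> Fint \<rho> l = s" using lp l by simp
  next
    fix l' assume l': "0 < l' \<and> Fint \<rho> l' = s"
    show "l' = l"
    proof (rule ccontr)
      assume "l' \<noteq> l"
      then consider "l' < l" | "l < l'" by linarith
      then show False
      proof cases
        case 1 then show False using F_strict[of l' l] l l' s by auto
      next
        case 2 then show False using F_strict[of l l'] l l' s by auto
      qed
    qed
  qed
qed

lemma height_eq: "height \<rho> s = (THE l. 0 < l \<and> Fint \<rho> l = s)"
  unfolding height_def Fint_def ..

lemma h_prop: "0 < s \<Longrightarrow> s < 1 \<Longrightarrow> 0 < height \<rho> s \<and> Fint \<rho> (height \<rho> s) = s"
  unfolding height_eq by (rule theI') (rule h_ex1)

lemma h_pos: "0 < s \<Longrightarrow> s < 1 \<Longrightarrow> 0 < height \<rho> s"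
  using h_prop by blast

lemma h_F: "0 < s \<Longrightarrow> s < 1 \<Longrightarrow> Fint \<rho> (height \<rho> s) = s"
  using h_prop by blast

lemma h_eq:
  assumes "0 < l" "Fint \<rho> l = s" "0 < s" "s < 1"
  shows "height \<rho> s = l"
  unfolding height_eq using the1_equality[OF h_ex1[OF assms(3,4)], of l] assms by simp

lemma m_h_pos: "0 < s \<Longrightarrow> s < 1 \<Longrightarrow> 0 < mlev \<rho> (height \<rho> s)"
  using F_lt1_iff[of "height \<rho> s"] h_pos h_F by force

lemma h_strict: "0 < s \<Longrightarrow> s < s' \<Longrightarrow> s' < 1 \<Longrightarrow> height \<rho> s < height \<rho> s'"
proof (rule ccontr)
  assume a: "0 < s" "s < s'" "s' < 1" "\<not> height \<rho> s < height \<rho> s'"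
  then have "Fint \<rho> (height \<rho> s') \<le> Fint \<rho> (height \<rho> s)"
    using h_pos[of s'] by (intro F_mono) auto
  then show False using h_F[of s] h_F[of s'] a by simp
qed

lemma h_mono: "0 < s \<Longrightarrow> s \<le> s' \<Longrightarrow> s' < 1 \<Longrightarrow> height \<rho> s \<le> height \<rho> s'"
  using h_strict[of s s'] by (cases "s = s'") auto

lemma h_lt_top: "0 < s \<Longrightarrow> s < 1 \<Longrightarrow> height \<rho> s < \<rho> 0"
  using F_top[of "height \<rho> s"] h_F[of s] by force

lemma h_cont: "0 < s \<Longrightarrow> s < 1 \<Longrightarrow> isCont (height \<rho>) s"
proof -
  assume s: "0 < s" "s < 1"
  define l where "l = height \<rho> s"
  define s' where "s' = (1 + s) / 2"
  have s': "s < s'" "s' < 1" using s by (auto simp: s'_def)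
  have lp: "0 < l" using h_pos[OF s] by (simp add: l_def)
  have ls': "l < height \<rho> s'" unfolding l_def using h_strict[of s s'] s s' by simp
  define d where "d = min (l / 2) (height \<rho> s' - l)"
  have d: "0 < d" using lp ls' by (simp add: d_def)
  have zf: "0 < z \<and> Fint \<rho> z < 1" if z: "\<bar>z - l\<bar> \<le> d" for z
  proof -
    have z1: "\<bar>z - l\<bar> \<le> l / 2" and z2: "\<bar>z - l\<bar> \<le> height \<rho> s' - l"
      using z unfolding d_def by auto
    have zp: "0 < z" using z1 lp by arith
    have zs: "z \<le> height \<rho> s'" using z2 by arith
    have "Fint \<rho> z \<le> Fint \<rho> (height \<rho> s')" using zp zs by (intro F_mono) auto
    then have "Fint \<rho> z < 1" using h_F[of s'] s s' by simp
    with zp show ?thesis by simp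
  qed
  have "isCont (height \<rho>) (Fint \<rho> l)"
  proof (rule isCont_inverse_function[where f="Fint \<rho>" and g="height \<rho>" and x=l, OF d])
    fix z assume z: "\<bar>z - l\<bar> \<le> d"
    show "height \<rho> (Fint \<rho> z) = z" using zf[OF z] F_pos[of z] by (intro h_eq) auto
  next
    fix z assume z: "\<bar>z - l\<bar> \<le> d"
    show "isCont (Fint \<rho>) z" using zf[OF z] F_isCont by blast
  qed
  then show ?thesis using h_F[OF s] by (simp add: l_def)
qed

lemma h_lim0: "filterlim (height \<rho>) (at_right 0) (at_right 0)"
  unfolding filterlim_at
proof
  show "\<forall>\<^sub>F x in at_right 0. height \<rho> x \<in> {0<..} \<and> height \<rho> x \<noteq> 0"
    unfolding eventually_at_right_field
    by (rule exI[of _ 1]) (auto dest: h_pos)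
  show "(height \<rho> \<longlongrightarrow> 0) (at_right 0)"
  proof (rule order_tendstoI)
    fix a :: real assume "a < 0"
    then show "\<forall>\<^sub>F x in at_right 0. a < height \<rho> x"
      unfolding eventually_at_right_field
      by (intro exI[of _ 1]) (auto dest: h_pos[of _] intro: less_trans)
  next
    fix a :: real assume a: "0 < a"
    have Fa: "0 < Fint \<rho> a" using F_pos[OF a] .
    show "\<forall>\<^sub>F x in at_right 0. height \<rho> x < a"
      unfolding eventually_at_right_field
    proof (intro exI[of _ "min (Fint \<rho> a) 1"] conjI allI impI)
      show "0 < min (Fint \<rho> a) 1" using Fa by simp
      fix y :: real assume y: "0 < y" "y < min (Fint \<rho> a) 1"
      show "height \<rho> y < a"
      proof (rule ccontr)
        assume "\<not> height \<rho> y < a"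
        then have "Fint \<rho> a \<le> Fint \<rho> (height \<rho> y)" using a by (intro F_mono) auto
        then show False using h_F[of y] y by simp
      qed
    qed
  qed
qed


definition "DM = distr (restrict_space lborel (cball (0::'a) R)) borel \<rho>"

lemma DM_fbm: "finite_borel_measure DM"
proof -
  have sp: "space DM = UNIV" unfolding DM_def by simp
  have "emeasure DM (space DM) = emeasure (restrict_space lborel (cball (0::'a) R)) (space (restrict_space lborel (cball (0::'a) R)))"
    unfolding DM_def sp[unfolded DM_def]
    by (subst emeasure_distr) (auto intro!: measurable_restrict_space1)
  also have "\<dots> = emeasure lborel (cball (0::'a) R)"
    by (subst emeasure_restrict_space) auto
  also have "\<dots> \<noteq> \<infinity>" using cball_fmeas by (simp add: fmeasurable_def)
  finally have "finite_measure DM" by (intro finite_measureI)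
  moreover have "sets DM = sets borel" unfolding DM_def by simp
  ultimately show ?thesis unfolding finite_borel_measure_def finite_borel_measure_axioms_def by simp
qed

lemma DM_measure: "A \<in> sets borel \<Longrightarrow> measure DM A = measure lborel {x \<in> cball 0 R. \<rho> x \<in> A}"
proof -
  assume A: "A \<in> sets borel"
  have "measure DM A = measure (restrict_space lborel (cball (0::'a) R)) (\<rho> -` A \<inter> space (restrict_space lborel (cball (0::'a) R)))"
    unfolding DM_def using A by (subst measure_distr) (auto intro!: measurable_restrict_space1)
  also have "\<dots> = measure lborel (\<rho> -` A \<inter> cball 0 R)"
    by (subst measure_restrict_space) auto
  also have "\<rho> -` A \<inter> cball 0 R = {x \<in> cball 0 R. \<rho> x \<in> A}" by auto
  finally show ?thesis .
qed

lemma m_cdf: "0 \<le> l \<Longrightarrow> mlev \<rho> l = measure lborel (cball (0::'a) R) - cdf DM l"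
proof -
  assume l: "0 \<le> l"
  have "cdf DM l = measure lborel {x \<in> cball 0 R. \<rho> x \<in> {..l}}"
    unfolding cdf_def by (rule DM_measure) simp
  moreover have "{x. l < \<rho> x} = cball 0 R - {x \<in> cball 0 R. \<rho> x \<in> {..l}}"
    using pos_sub[OF l] by auto
  moreover have "measure lborel (cball (0::'a) R - {x \<in> cball 0 R. \<rho> x \<in> {..l}}) =
      measure lborel (cball (0::'a) R) - measure lborel {x \<in> cball 0 R. \<rho> x \<in> {..l}}"
    using cball_fmeas by (intro measure_Diff) (auto simp: fmeasurable_def)
  ultimately show ?thesis unfolding mlev_def by simp
qed

lemma m_right_cont: "0 \<le> l \<Longrightarrow> (mlev \<rho> \<longlongrightarrow> mlev \<rho> l) (at_right l)"
proof -
  assume l: "0 \<le> l"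
  interpret finite_borel_measure DM by (rule DM_fbm)
  have "((\<lambda>z. measure lborel (cball (0::'a) R) - cdf DM z) \<longlongrightarrow> measure lborel (cball (0::'a) R) - cdf DM l) (at_right l)"
    using cdf_is_right_cont[of l] unfolding continuous_within by (intro tendsto_intros)
  moreover have "\<forall>\<^sub>F z in at_right l. measure lborel (cball (0::'a) R) - cdf DM z = mlev \<rho> z"
    unfolding eventually_at_right_field using l by (intro exI[of _ "l + 1"]) (auto simp: m_cdf)
  ultimately show ?thesis using m_cdf[OF l] by (simp add: tendsto_cong)
qed

lemma m_isCont_iff: "0 < l \<Longrightarrow> isCont (mlev \<rho>) l \<longleftrightarrow> measure lborel {x. \<rho> x = l} = 0"
proof -
  assume l: "0 < l"
  interpret finite_borel_measure DM by (rule DM_fbm)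
  have "\<forall>\<^sub>F z in nhds l. mlev \<rho> z = measure lborel (cball (0::'a) R) - cdf DM z"
  proof -
    have ev: "\<forall>\<^sub>F z in nhds l. z \<in> {0<..}" using l by (intro eventually_nhds_in_open) auto
    show ?thesis by (rule eventually_mono[OF ev]) (simp add: m_cdf)
  qed
  then have "isCont (mlev \<rho>) l \<longleftrightarrow> isCont (\<lambda>z. measure lborel (cball (0::'a) R) - cdf DM z) l"
    by (rule isCont_cong)
  also have "\<dots> \<longleftrightarrow> isCont (cdf DM) l"
  proof
    assume "isCont (\<lambda>z. measure lborel (cball (0::'a) R) - cdf DM z) l"
    from continuous_diff[OF continuous_const this]
    have "isCont (\<lambda>z. measure lborel (cball (0::'a) R) - (measure lborel (cball (0::'a) R) - cdf DM z)) l" .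
    then show "isCont (cdf DM) l" by simp
  qed (intro continuous_intros)
  also have "\<dots> \<longleftrightarrow> measure DM {l} = 0" by (rule isCont_cdf)
  also have "measure DM {l} = measure lborel {x \<in> cball 0 R. \<rho> x \<in> {l}}" by (rule DM_measure) simp
  also have "{x \<in> cball 0 R. \<rho> x \<in> {l}} = {x. \<rho> x = l}"
    using pos_sub[of "l/2"] l by force
  finally show ?thesis .
qed

lemma F_deriv:
  assumes l: "0 < l" and mc: "isCont (mlev \<rho>) l"
  shows "(Fint \<rho> has_field_derivative mlev \<rho> l) (at l)"
proof -
  have bound: "\<bar>(Fint \<rho> y - Fint \<rho> l) / (y - l) - mlev \<rho> l\<bar> \<le> mlev \<rho> (l - \<bar>y - l\<bar>) - mlev \<rho> (l + \<bar>y - l\<bar>)"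
    if y: "y \<noteq> l" "\<bar>y - l\<bar> < l" for y
  proof -
    define e where "e = \<bar>y - l\<bar>"
    have e: "0 < e" "e < l" using y by (auto simp: e_def)
    define A where "A = {x. l - e < \<rho> x}"
    define B where "B = {x. l + e < \<rho> x}"
    have Af: "A \<in> fmeasurable lborel" unfolding A_def using e by (intro lev_fmeas) auto
    have Bf: "B \<in> fmeasurable lborel" unfolding B_def using e by (intro lev_fmeas) auto
    have BA: "B \<subseteq> A" unfolding A_def B_def using e by auto
    have iA: "integrable lborel (indicator A :: 'a \<Rightarrow> real)" using Af by (simp add: fmeasurable_def)
    have iB: "integrable lborel (indicator B :: 'a \<Rightarrow> real)" using Bf by (simp add: fmeasurable_def)
    have iL: "integrable lborel (indicator {x. l < \<rho> x} :: 'a \<Rightarrow> real)"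
      using lev_fmeas[of l] l by (simp add: fmeasurable_def)
    have y0: "0 \<le> y" using y by arith
    have pw: "\<bar>min (\<rho> x) y - min (\<rho> x) l - (y - l) * indicator {x. l < \<rho> x} x\<bar>
        \<le> e * (indicator A x - indicator B x)" for x
      unfolding A_def B_def e_def using e y
      by (auto simp: indicator_def min_def abs_if e_def split: if_splits)
    have "Fint \<rho> y - Fint \<rho> l - (y - l) * mlev \<rho> l =
        (LINT x|lborel. min (\<rho> x) y - min (\<rho> x) l - (y - l) * indicator {x. l < \<rho> x} x)"
      unfolding Fint_def mlev_def using min_int[OF y0] min_int[of l] l iL
      by (simp add: Bochner_Integration.integral_diff)
    also have "\<bar>\<dots>\<bar> \<le> (LINT x|lborel. \<bar>min (\<rho> x) y - min (\<rho> x) l - (y - l) * indicator {x. l < \<rho> x} x\<bar>)"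
      by (rule integral_abs_bound)
    also have "\<dots> \<le> (LINT x|lborel. e * (indicator A x - indicator B x))"
      using pw min_int[OF y0] min_int[of l] l iL iA iB
      by (intro integral_mono) auto
    also have "\<dots> = e * (measure lborel A - measure lborel B)"
      using iA iB by simp
    finally have "\<bar>Fint \<rho> y - Fint \<rho> l - (y - l) * mlev \<rho> l\<bar> \<le> e * (measure lborel A - measure lborel B)" .
    moreover have "\<bar>(Fint \<rho> y - Fint \<rho> l) / (y - l) - mlev \<rho> l\<bar> = \<bar>Fint \<rho> y - Fint \<rho> l - (y - l) * mlev \<rho> l\<bar> / e"
      using y unfolding e_def by (simp add: field_simps abs_div)
    ultimately show ?thesis using e unfolding A_def B_def mlev_def e_def
      by (simp add: divide_le_eq mult.commute)
  qed
  have lim: "((\<lambda>y. mlev \<rho> (l - \<bar>y - l\<bar>) - mlev \<rho> (l + \<bar>y - l\<bar>)) \<longlongrightarrow> mlev \<rho> (l - \<bar>l - l\<bar>) - mlev \<rho> (l + \<bar>l - l\<bar>)) (at l)"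
    using mc by (intro tendsto_intros isCont_tendsto_compose[where g="mlev \<rho>"]) (auto intro!: tendsto_eq_intros)
  then have lim0: "((\<lambda>y. mlev \<rho> (l - \<bar>y - l\<bar>) - mlev \<rho> (l + \<bar>y - l\<bar>)) \<longlongrightarrow> 0) (at l)" by simp
  have "((\<lambda>y. (Fint \<rho> y - Fint \<rho> l) / (y - l) - mlev \<rho> l) \<longlongrightarrow> 0) (at l)"
  proof (rule Lim_null_comparison[OF _ lim0])
    have "\<forall>\<^sub>F y in at l. y \<noteq> l \<and> \<bar>y - l\<bar> < l"
      using l unfolding eventually_at by (intro exI[of _ l]) (auto simp: dist_real_def)
    then show "\<forall>\<^sub>F y in at l. norm ((Fint \<rho> y - Fint \<rho> l) / (y - l) - mlev \<rho> l) \<le> mlev \<rho> (l - \<bar>y - l\<bar>) - mlev \<rho> (l + \<bar>y - l\<bar>)"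
      by eventually_elim (use bound in auto)
  qed
  then have "((\<lambda>y. ((Fint \<rho> y - Fint \<rho> l) / (y - l) - mlev \<rho> l) + mlev \<rho> l) \<longlongrightarrow> 0 + mlev \<rho> l) (at l)"
    by (intro tendsto_add tendsto_const)
  then have "((\<lambda>y. (Fint \<rho> y - Fint \<rho> l) / (y - l)) \<longlongrightarrow> mlev \<rho> l) (at l)"
    by simp
  then show ?thesis by (simp add: has_field_derivative_iff)
qed


lemma h_deriv:
  assumes s: "0 < s" "s < 1" and mc: "isCont (mlev \<rho>) (height \<rho> s)"
  shows "(height \<rho> has_field_derivative 1 / mlev \<rho> (height \<rho> s)) (at s)"
proof -
  have "(height \<rho> has_field_derivative inverse (mlev \<rho> (height \<rho> s))) (at s)"
  proof (rule DERIV_inverse_function[where f="Fint \<rho>" and a=0 and b=1])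
    show "(Fint \<rho> has_field_derivative mlev \<rho> (height \<rho> s)) (at (height \<rho> s))"
      using F_deriv[OF h_pos[OF s] mc] .
    show "mlev \<rho> (height \<rho> s) \<noteq> 0" using m_h_pos[OF s] by simp
    show "0 < s" "s < 1" by fact+
    show "\<And>y. 0 < y \<Longrightarrow> y < 1 \<Longrightarrow> Fint \<rho> (height \<rho> y) = y" using h_F by blast
    show "isCont (height \<rho>) s" using h_cont[OF s] .
  qed
  then show ?thesis by (simp add: inverse_eq_divide)
qed

definition "Ebad = {s \<in> {0<..<1::real}. \<not> isCont (mlev \<rho>) (height \<rho> s)}"

lemma Ebad_countable: "countable Ebad"
proof -
  have mo: "mono_on {0<..} (\<lambda>l. - mlev \<rho> l)"
    by (rule mono_onI) (use m_anti in auto)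
  have c: "countable {a \<in> {0<..}. \<not> isCont (\<lambda>l. - mlev \<rho> l) a}"
    by (rule mono_on_ctble_discont_open[OF _ mo]) simp
  have "isCont (\<lambda>l. - mlev \<rho> l) a \<Longrightarrow> isCont (mlev \<rho>) a" for a
    using continuous_minus[of "at a" "\<lambda>l. - mlev \<rho> l"] by simp
  then have "height \<rho> ` Ebad \<subseteq> {a \<in> {0<..}. \<not> isCont (\<lambda>l. - mlev \<rho> l) a}"
    unfolding Ebad_def using h_pos by auto
  then have "countable (height \<rho> ` Ebad)" using c by (rule countable_subset)
  moreover have "inj_on (height \<rho>) Ebad"
  proof (rule inj_onI)
    fix x y assume xy: "x \<in> Ebad" "y \<in> Ebad" "height \<rho> x = height \<rho> y"
    show "x = y"
    proof (rule ccontr)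
      assume "x \<noteq> y"
      then consider "x < y" | "y < x" by linarith
      then show False
        by cases (use xy h_strict[of x y] h_strict[of y x] in \<open>auto simp: Ebad_def\<close>)
    qed
  qed
  ultimately show ?thesis by (rule countable_image_inj_on)
qed

lemma h_deriv_ae: "s \<in> {0<..<1} - Ebad \<Longrightarrow> (height \<rho> has_field_derivative 1 / mlev \<rho> (height \<rho> s)) (at s)"
  by (rule h_deriv) (auto simp: Ebad_def)

lemma p_pos: "0 < s \<Longrightarrow> s < 1 \<Longrightarrow> 0 < 1 / mlev \<rho> (height \<rho> s)"
  using m_h_pos by simp

lemma p_mono: "0 < s \<Longrightarrow> s \<le> s' \<Longrightarrow> s' < 1 \<Longrightarrow> 1 / mlev \<rho> (height \<rho> s) \<le> 1 / mlev \<rho> (height \<rho> s')"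
proof -
  assume a: "0 < s" "s \<le> s'" "s' < 1"
  have "mlev \<rho> (height \<rho> s') \<le> mlev \<rho> (height \<rho> s)"
    using a h_mono[of s s'] h_pos[of s] by (intro m_anti) auto
  then show ?thesis using m_h_pos[of s'] a by (intro divide_left_mono) auto
qed

lemma p_ge: "0 < s \<Longrightarrow> s < 1 \<Longrightarrow> 1 / (unit_ball_vol DIM('a) * R ^ DIM('a)) \<le> 1 / mlev \<rho> (height \<rho> s)"
  using m_le[of "height \<rho> s"] h_pos[of s] m_h_pos[of s] by (intro divide_left_mono) auto

lemma p_lim0: "((\<lambda>s. 1 / mlev \<rho> (height \<rho> s)) \<longlongrightarrow> 1 / (unit_ball_vol DIM('a) * R ^ DIM('a))) (at_right 0)"
proof -
  have "((\<lambda>s. mlev \<rho> (height \<rho> s)) \<longlongrightarrow> mlev \<rho> 0) (at_right 0)"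
    using filterlim_compose[OF m_right_cont[of 0] h_lim0] by simp
  then have "((\<lambda>s. 1 / mlev \<rho> (height \<rho> s)) \<longlongrightarrow> 1 / mlev \<rho> 0) (at_right 0)"
  proof -
    have cpos: "0 < unit_ball_vol (real DIM('a))" by simp
    have "0 < mlev \<rho> 0" using m_0 cpos R_pos by simp
    then show ?thesis using \<open>((\<lambda>s. mlev \<rho> (height \<rho> s)) \<longlongrightarrow> mlev \<rho> 0) (at_right 0)\<close>
      by (intro tendsto_intros) auto
  qed
  then show ?thesis using m_0 by simp
qed


lemma p_le_dq:
  assumes "0 < s" "s < s'" "s' < 1"
  shows "(s' - s) * (1 / mlev \<rho> (height \<rho> s)) \<le> height \<rho> s' - height \<rho> s"
proof -
  have "Fint \<rho> (height \<rho> s') - Fint \<rho> (height \<rho> s) \<le> (height \<rho> s' - height \<rho> s) * mlev \<rho> (height \<rho> s)"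
    using assms h_pos[of s] h_strict[of s s'] by (intro F_diff_upper) auto
  then have "s' - s \<le> (height \<rho> s' - height \<rho> s) * mlev \<rho> (height \<rho> s)"
    using h_F[of s] h_F[of s'] assms by simp
  then show ?thesis using m_h_pos[of s] assms by (simp add: pos_divide_le_eq)
qed

lemma h_cont_on: "0 < a \<Longrightarrow> b < 1 \<Longrightarrow> continuous_on {a..b} (height \<rho>)"
  by (rule continuous_at_imp_continuous_on) (auto intro!: h_cont)

lemma p_int_ab:
  assumes a: "0 < a" and ab: "a + d \<le> b" and d: "0 < d" and b: "b + d < 1"
  shows "(\<lambda>s. 1 / mlev \<rho> (height \<rho> s)) integrable_on {a..b}"
    and "integral {a..b} (\<lambda>s. 1 / mlev \<rho> (height \<rho> s)) \<le> \<rho> 0"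
proof -
  let ?p = "\<lambda>s. 1 / mlev \<rho> (height \<rho> s)"
  let ?h = "height \<rho>"
  have mo: "mono_on {a..b} ?p"
    by (rule mono_onI) (use a b d p_mono in auto)
  show pi: "?p integrable_on {a..b}" by (rule integrable_on_mono_on[OF mo])
  have hc: "continuous_on {a..b+d} ?h" using a b by (intro h_cont_on) auto
  have hi: "?h integrable_on {u..v}" if "a \<le> u" "v \<le> b + d" for u v
    by (rule integrable_continuous_interval, rule continuous_on_subset[OF hc]) (use that in auto)
  have hsi: "(\<lambda>s. ?h (s + d)) integrable_on {a..b}"
    using integrable_shift_real_ivl[OF hi[of "a + d" "b + d"], of d] a d by simp
  have "d * integral {a..b} ?p = integral {a..b} (\<lambda>s. d * ?p s)"
    by (rule integral_mult[OF pi])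
  also have "\<dots> \<le> integral {a..b} (\<lambda>s. ?h (s + d) - ?h s)"
  proof (rule integral_le)
    show "(\<lambda>s. d * ?p s) integrable_on {a..b}" using integrable_on_cmult_left[OF pi, of d] by simp
    show "(\<lambda>s. ?h (s + d) - ?h s) integrable_on {a..b}"
      by (rule integrable_diff[OF hsi hi]) (use ab d in auto)
    fix s assume "s \<in> {a..b}"
    then show "d * ?p s \<le> ?h (s + d) - ?h s"
      using p_le_dq[of s "s + d"] a b d by auto
  qed
  also have "\<dots> = integral {a..b} (\<lambda>s. ?h (s + d)) - integral {a..b} ?h"
    by (rule integral_diff[OF hsi hi]) (use ab d in auto)
  also have "integral {a..b} (\<lambda>s. ?h (s + d)) = integral {a+d..b+d} ?h"
    using integral_shift_real_ivl[where a="a + d" and c=d and b="b + d" and f="?h"] by simp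
  also have "integral {a+d..b+d} ?h = integral {a+d..b} ?h + integral {b..b+d} ?h"
    using Henstock_Kurzweil_Integration.integral_combine[where a="a+d" and c=b and b="b+d" and f="?h"] hi[of "a+d" "b+d"] ab d a by simp
  also have "integral {a..b} ?h = integral {a..a+d} ?h + integral {a+d..b} ?h"
    using Henstock_Kurzweil_Integration.integral_combine[where a=a and c="a+d" and b=b and f="?h"] hi[of a b] ab d a by simp
  also have "integral {b..b+d} ?h \<le> integral {b..b+d} (\<lambda>_. ?h (b + d))"
    by (rule integral_le) (use hi[of b "b+d"] ab d a b h_mono in auto)
  also have "integral {a..a+d} (\<lambda>_. ?h a) \<le> integral {a..a+d} ?h"
    by (rule integral_le) (use hi[of a "a+d"] ab d a b h_mono in auto)
  ultimately have "d * integral {a..b} ?p \<le> d * (?h (b + d) - ?h a)"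
    using d by (simp add: algebra_simps)
  then have "integral {a..b} ?p \<le> ?h (b + d) - ?h a" using d by simp
  also have "\<dots> \<le> \<rho> 0" using h_lt_top[of "b + d"] h_pos[of a] a b d ab by simp
  finally show "integral {a..b} ?p \<le> \<rho> 0" .
qed


lemma p_meas: "(\<lambda>s. indicator {0<..<1::real} s * (1 / mlev \<rho> (height \<rho> s))) \<in> borel_measurable lborel"
proof -
  let ?p = "\<lambda>s. 1 / mlev \<rho> (height \<rho> s)"
  have mo: "mono_on {0<..<1} ?p"
    by (rule mono_onI) (use p_mono in auto)
  have "?p \<in> borel_measurable (restrict_space borel {0<..<1})"
    by (rule borel_measurable_mono_on_fnc[OF mo])
  also have "borel_measurable (restrict_space borel {0<..<1::real}) = borel_measurable (restrict_space lborel {0<..<1})"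
    by (intro measurable_cong_sets sets_restrict_space_cong) auto
  finally have "?p \<in> borel_measurable (restrict_space lborel {0<..<1})" .
  then have "(\<lambda>x. indicator {0<..<1::real} x *\<^sub>R ?p x) \<in> borel_measurable lborel"
    by (subst (asm) borel_measurable_restrict_space_iff) auto
  then show ?thesis by simp
qed

lemma eventually_in_ab:
  assumes s: "0 < s" "s < (1::real)"
  shows "\<forall>\<^sub>F k in sequentially. 1 / (real k + 4) \<le> s \<and> s \<le> 1 - 2 / (real k + 4)"
proof -
  obtain N :: nat where N: "2 / s + 2 / (1 - s) < real N" using reals_Archimedean2 by blast
  show ?thesis unfolding eventually_sequentially
  proof (intro exI[of _ N] allI impI)
    fix k assume k: "N \<le> k"
    have k4: "0 < real k + 4" by simp
    have "2 / s < real k + 4" using N k s by (smt (verit) divide_nonneg_nonneg of_nat_mono)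
    then have "2 < s * (real k + 4)" using s by (simp add: divide_less_eq mult.commute)
    then have 1: "1 / (real k + 4) \<le> s" using k4 by (simp add: divide_le_eq mult.commute)
    have "2 / (1 - s) < real k + 4" using N k s by (smt (verit) divide_nonneg_nonneg of_nat_mono)
    then have "2 < (1 - s) * (real k + 4)" using s by (simp add: divide_less_eq mult.commute)
    then have "2 / (real k + 4) \<le> 1 - s" using k4 by (simp add: divide_le_eq mult.commute)
    then have 2: "s \<le> 1 - 2 / (real k + 4)" by simp
    show "1 / (real k + 4) \<le> s \<and> s \<le> 1 - 2 / (real k + 4)" using 1 2 by simp
  qed
qed

lemma p_set_int: "set_integrable lborel {0<..<1::real} (\<lambda>s. 1 / mlev \<rho> (height \<rho> s))"
proof -
  let ?p = "\<lambda>s. 1 / mlev \<rho> (height \<rho> s)"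
  define a where "a k = 1 / (real k + 4)" for k :: nat
  define b where "b k = 1 - 2 / (real k + 4)" for k :: nat
  define f where "f k s = ennreal (?p s) * indicator {a k..b k} s" for k s
  define u where "u s = ennreal (?p s) * indicator {0<..<1::real} s" for s
  have ab: "0 < a k" "a k + 1 / (real k + 4) \<le> b k" "0 < 1 / (real k + 4)" "b k + 1 / (real k + 4) < 1" for k
  proof -
    have k4: "4 \<le> real k + 4" by simp
    show "0 < a k" "0 < 1 / (real k + 4)" unfolding a_def by simp_all
    show "b k + 1 / (real k + 4) < 1" unfolding b_def by (simp add: field_simps)
    have "4 / (real k + 4) \<le> 1" using k4 by (simp add: divide_le_eq)
    then show "a k + 1 / (real k + 4) \<le> b k" unfolding a_def b_def by (simp add: field_simps)
  qed
  have sub: "{a k..b k} \<subseteq> {0<..<1}" for k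
  proof -
    have "b k < 1" using ab(3)[of k] ab(4)[of k] by linarith
    then show ?thesis using ab(1)[of k] by auto
  qed
  have fint: "integral\<^sup>N lborel (f k) = ennreal (integral {a k..b k} ?p)" for k
    unfolding f_def
  proof (rule nn_integral_has_integral_lebesgue')
    fix x assume "x \<in> {a k..b k}"
    then have "0 < x" "x < 1" using sub[of k] by auto
    then show "0 \<le> ?p x" using p_pos[of x] by simp
  next
    show "(?p has_integral integral {a k..b k} ?p) {a k..b k}"
      using p_int_ab(1)[OF ab[of k]] by (rule integrable_integral)
  qed
  have fle: "integral\<^sup>N lborel (f k) \<le> ennreal (\<rho> 0)" for k
    unfolding fint by (rule ennreal_leI) (rule p_int_ab(2)[OF ab[of k]])
  have inc: "incseq f"
  proof (rule incseq_SucI, rule le_funI)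
    fix k s
    have "a (Suc k) \<le> a k" "b k \<le> b (Suc k)" unfolding a_def b_def by (simp_all add: frac_le)
    then show "f k s \<le> f (Suc k) s" unfolding f_def by (auto simp: indicator_def)
  qed
  have fmeas: "f k \<in> borel_measurable lborel" for k
  proof -
    have "f k = (\<lambda>s. ennreal (indicator {a k..b k} s * (indicator {0<..<1::real} s * ?p s)))"
      using sub[of k] unfolding f_def by (auto simp: indicator_def fun_eq_iff)
    also have "\<dots> \<in> borel_measurable lborel" using p_meas by measurable
    finally show ?thesis .
  qed
  have lim: "(\<lambda>k. f k s) \<longlonglongrightarrow> u s" for s
  proof (cases "0 < s \<and> s < 1")
    case True
    have ev: "\<forall>\<^sub>F k in sequentially. 1 / (real k + 4) \<le> s \<and> s \<le> 1 - 2 / (real k + 4)"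
      using eventually_in_ab[of s] True by simp
    have "\<forall>\<^sub>F k in sequentially. f k s = u s"
      by (rule eventually_mono[OF ev]) (use True in \<open>auto simp: f_def u_def a_def b_def indicator_def\<close>)
    then show ?thesis by (rule tendsto_eventually)
  next
    case False
    then have "f k s = u s" for k using sub[of k] unfolding f_def u_def by (auto simp: indicator_def)
    then show ?thesis by simp
  qed
  have "(\<lambda>k. integral\<^sup>N lborel (f k)) \<longlonglongrightarrow> integral\<^sup>N lborel u"
    by (rule nn_integral_LIMSEQ[OF inc fmeas lim])
  then have "integral\<^sup>N lborel u \<le> ennreal (\<rho> 0)"
    by (rule LIMSEQ_le_const2) (use fle in auto)
  moreover have "(\<integral>\<^sup>+ s. ennreal (indicator {0<..<1::real} s * ?p s) \<partial>lborel) = integral\<^sup>N lborel u"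
    unfolding u_def by (intro nn_integral_cong) (auto simp: indicator_def)
  ultimately have "(\<integral>\<^sup>+ s. ennreal (indicator {0<..<1::real} s * ?p s) \<partial>lborel) < \<infinity>"
    by (simp add: le_less_trans)
  note fin = this
  have "integrable lborel (\<lambda>s. indicator {0<..<1::real} s * ?p s)"
  proof (rule integrableI_nonneg[OF p_meas])
    show "AE s in lborel. 0 \<le> indicator {0<..<1::real} s * ?p s"
      by (rule AE_I2) (simp add: indicator_def m_nonneg)
    show "(\<integral>\<^sup>+ s. ennreal (indicator {0<..<1::real} s * ?p s) \<partial>lborel) < \<infinity>" by (rule fin)
  qed
  then show ?thesis unfolding set_integrable_def by simp
qed


lemma in_supp: "\<rho> x \<noteq> 0 \<Longrightarrow> x \<in> supp \<rho>"
  unfolding supp_def by (rule subsetD[OF closure_subset]) simp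

lemma level_null:
  assumes srd: "strictly_radially_decreasing_on_supp \<rho>" and l: "0 < l"
  shows "measure lborel {x. \<rho> x = l} = 0"
proof (cases "{x. \<rho> x = l} = {}")
  case True then show ?thesis by simp
next
  case False
  then obtain x0 where x0: "\<rho> x0 = l" by auto
  have S: "\<And>x y. norm x < norm y \<Longrightarrow> y \<in> supp \<rho> \<Longrightarrow> \<rho> y < \<rho> x"
    using srd unfolding strictly_radially_decreasing_on_supp_def by blast
  have sub: "{x. \<rho> x = l} \<subseteq> sphere 0 (norm x0)"
  proof
    fix y assume y: "y \<in> {x. \<rho> x = l}"
    then have yl: "\<rho> y = l" by simp
    have ys: "y \<in> supp \<rho>" using yl l by (intro in_supp) simp
    have xs: "x0 \<in> supp \<rho>" using x0 l by (intro in_supp) simp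
    have "\<not> norm y < norm x0" using S[OF _ xs, of y] x0 yl by auto
    moreover have "\<not> norm x0 < norm y" using S[OF _ ys, of x0] x0 yl by auto
    ultimately show "y \<in> sphere 0 (norm x0)" by simp
  qed
  have "sphere (0::'a) (norm x0) \<in> null_sets lborel"
    using negligible_sphere[of "0::'a" "norm x0"]
    by (auto simp: null_sets_completion_iff negligible_iff_null_sets negligible_convex_frontier)
  then have "{x. \<rho> x = l} \<in> null_sets lborel"
    by (rule null_sets_subset) (use sub in auto)
  then show ?thesis by (rule measure_eq_0_null_sets)
qed

lemma srd_isCont_m:
  assumes srd: "strictly_radially_decreasing_on_supp \<rho>" and l: "0 < l"
  shows "isCont (mlev \<rho>) l"
  using m_isCont_iff[OF l] level_null[OF srd l] by simp

lemma srd_p_cont: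
  assumes srd: "strictly_radially_decreasing_on_supp \<rho>" and s: "0 < s" "s < 1"
  shows "isCont (\<lambda>s. 1 / mlev \<rho> (height \<rho> s)) s"
proof -
  have "isCont (\<lambda>s. mlev \<rho> (height \<rho> s)) s"
    by (rule isCont_o2[OF h_cont[OF s] srd_isCont_m[OF srd h_pos[OF s]]])
  then show ?thesis using m_h_pos[OF s] by (intro continuous_intros) auto
qed

lemma srd_p_unbounded:
  assumes srd: "strictly_radially_decreasing_on_supp \<rho>" and K: "0 < K"
  shows "\<exists>s. 0 < s \<and> s < 1 \<and> K < 1 / mlev \<rho> (height \<rho> s)"
proof -
  let ?cv = "unit_ball_vol (real DIM('a))"
  have S: "\<And>x y. norm x < norm y \<Longrightarrow> y \<in> supp \<rho> \<Longrightarrow> \<rho> y < \<rho> x"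
    using srd unfolding strictly_radially_decreasing_on_supp_def by blast
  have lim: "((\<lambda>e. ?cv * e ^ DIM('a)) \<longlongrightarrow> ?cv * 0 ^ DIM('a)) (at_right 0)"
    by (intro tendsto_intros)
  have z: "?cv * 0 ^ DIM('a) = 0" using DIM_positive[where 'a='a] by (simp add: power_0_left)
  have "((\<lambda>e. ?cv * e ^ DIM('a)) \<longlongrightarrow> 0) (at_right 0)" using lim unfolding z .
  then have ev1: "\<forall>\<^sub>F e in at_right 0. ?cv * e ^ DIM('a) < 1 / K"
    using K by (intro order_tendstoD(2)) auto
  have ev2: "\<forall>\<^sub>F e in at_right (0::real). e < R"
    using R_pos by (intro order_tendstoD(2)[OF tendsto_ident_at]) 
  have "\<forall>\<^sub>F e in at_right (0::real). 0 < e"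
    by (simp add: eventually_at_right_less)
  then have "\<forall>\<^sub>F e in at_right (0::real). 0 < e \<and> e < R \<and> ?cv * e ^ DIM('a) < 1 / K"
    using ev1 ev2 by eventually_elim auto
  then obtain \<epsilon> where eps: "0 < \<epsilon>" "\<epsilon> < R" "?cv * \<epsilon> ^ DIM('a) < 1 / K"
    using eventually_happens'[OF trivial_limit_at_right_real] by blast
  obtain w :: 'a where w: "norm w = \<epsilon>" using vector_choose_size[of \<epsilon>] eps by auto
  define v where "v = \<rho> w"
  have v0: "0 \<le> v" unfolding v_def by (rule nn)
  have wsupp: "w \<in> supp \<rho>" using sR w eps by simp
  have ball_sub: "ball 0 \<epsilon> \<subseteq> {x. v < \<rho> x}"
    using S[OF _ wsupp] w unfolding v_def by auto
  have "0 < measure lborel (ball (0::'a) \<epsilon>)" using ball_meas[of \<epsilon>] eps by simp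
  also have "measure lborel (ball (0::'a) \<epsilon>) \<le> mlev \<rho> v"
    unfolding mlev_def by (rule measure_mono_fmeasurable[OF ball_sub]) (auto intro: lev_fmeas v0)
  finally have "0 < mlev \<rho> v" .
  then have Fv: "Fint \<rho> v < 1" using F_lt1_iff[OF v0] by simp
  have Fv0: "0 \<le> Fint \<rho> v" using F_mono[of 0 v] F_0 v0 by simp
  define s where "s = (Fint \<rho> v + 1) / 2"
  have s: "0 < s" "s < 1" "Fint \<rho> v < s" using Fv Fv0 by (auto simp: s_def)
  have hs: "v < height \<rho> s"
  proof (rule ccontr)
    assume "\<not> v < height \<rho> s"
    then have "Fint \<rho> (height \<rho> s) \<le> Fint \<rho> v" using h_pos[of s] s by (intro F_mono) auto
    then show False using h_F[of s] s by simp
  qed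
  have "{x. height \<rho> s < \<rho> x} \<subseteq> ball 0 \<epsilon>"
  proof
    fix x assume x: "x \<in> {x. height \<rho> s < \<rho> x}"
    show "x \<in> ball 0 \<epsilon>"
    proof (rule ccontr)
      assume "x \<notin> ball 0 \<epsilon>"
      then have "norm w \<le> norm x" using w by simp
      then have "\<rho> x \<le> v" unfolding v_def by (rule rho_anti)
      then show False using x hs by simp
    qed
  qed
  have "mlev \<rho> (height \<rho> s) \<le> measure lborel (ball (0::'a) \<epsilon>)"
  proof -
    have bf: "ball (0::'a) \<epsilon> \<in> fmeasurable lborel"
      by (rule fmeasurableI2[OF fmeasurable_compact[of "cball 0 \<epsilon>"]]) auto
    show ?thesis unfolding mlev_def by (rule measure_mono_fmeasurable[OF \<open>{x. height \<rho> s < \<rho> x} \<subseteq> ball 0 \<epsilon>\<close> _ bf]) simp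
  qed
  also have "\<dots> < 1 / K" using ball_meas[of \<epsilon>] eps by simp
  finally have "mlev \<rho> (height \<rho> s) < 1 / K" .
  then have "K < 1 / mlev \<rho> (height \<rho> s)" using m_h_pos[of s] s K by (simp add: field_simps)
  then show ?thesis using s by blast
qed


lemma cont_m_strict:
  assumes cont: "continuous_on UNIV \<rho>" and l: "0 < l1" "l1 < l2" "l2 < \<rho> 0"
  shows "mlev \<rho> l2 < mlev \<rho> l1"
proof -
  define U where "U = {x. l1 < \<rho> x \<and> \<rho> x < l2}"
  have oU: "open U" unfolding U_def
    by (intro open_Collect_conj open_Collect_less cont continuous_on_const)
  obtain w :: 'a where w: "norm w = 1" using vector_choose_size[of 1] by auto
  define mid where "mid = (l1 + l2) / 2"
  have "continuous_on {0..R+1} (\<lambda>u. \<rho> (u *\<^sub>R w))"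
    by (rule continuous_on_compose2[OF cont]) (auto intro!: continuous_intros)
  moreover have "\<rho> ((R + 1) *\<^sub>R w) \<le> mid"
  proof -
    have "R < norm ((R + 1) *\<^sub>R w)" using w R_pos by simp
    then have "\<rho> ((R + 1) *\<^sub>R w) = 0" by (rule rho_out)
    then show ?thesis using l by (simp add: mid_def)
  qed
  moreover have "mid \<le> \<rho> (0 *\<^sub>R w)" using l by (simp add: mid_def)
  ultimately obtain u where "0 \<le> u" "u \<le> R + 1" "\<rho> (u *\<^sub>R w) = mid"
    using IVT2'[of "\<lambda>u. \<rho> (u *\<^sub>R w)" "R + 1" mid 0] R_pos by auto
  then have "u *\<^sub>R w \<in> U" using l by (simp add: U_def mid_def)
  then obtain z r where zr: "0 < r" "ball z r \<subseteq> U" using oU open_contains_ball by blast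
  have Uf: "U \<subseteq> {x. l1 < \<rho> x} - {x. l2 < \<rho> x}" unfolding U_def by auto
  have fm1: "{x. l1 < \<rho> x} \<in> fmeasurable lborel" using l by (intro lev_fmeas) auto
  have diff_f: "{x. l1 < \<rho> x} - {x. l2 < \<rho> x} \<in> fmeasurable lborel"
    by (rule fmeasurableI2[OF fm1]) auto
  have "0 < measure lborel (ball z r)" using content_ball[of r z] zr by simp
  also have "measure lborel (ball z r) \<le> measure lborel ({x. l1 < \<rho> x} - {x. l2 < \<rho> x})"
    by (rule measure_mono_fmeasurable[OF _ _ diff_f]) (use zr Uf in auto)
  also have "\<dots> = mlev \<rho> l1 - mlev \<rho> l2"
    unfolding mlev_def using fm1 l by (subst measure_Diff) (auto simp: fmeasurable_def)
  finally show ?thesis by simp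
qed

lemma cont_p_strict:
  assumes cont: "continuous_on UNIV \<rho>" and s: "0 < s" "s < s'" "s' < 1"
  shows "1 / mlev \<rho> (height \<rho> s) < 1 / mlev \<rho> (height \<rho> s')"
proof -
  have "mlev \<rho> (height \<rho> s') < mlev \<rho> (height \<rho> s)"
    using s h_pos[of s] h_strict[of s s'] h_lt_top[of s'] by (intro cont_m_strict[OF cont]) auto
  then show ?thesis using m_h_pos[of s'] s by (intro divide_strict_left_mono) auto
qed

end



context
  fixes g :: "real \<Rightarrow> real" and g0 c e :: real
  assumes g0: "0 < g0" and gge: "\<And>s. 0 < s \<Longrightarrow> s < 1 \<Longrightarrow> g0 \<le> g s"
    and gmono: "\<And>s s'. 0 < s \<Longrightarrow> s \<le> s' \<Longrightarrow> s' < 1 \<Longrightarrow> g s \<le> g s'"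
    and glim: "(g \<longlongrightarrow> g0) (at_right 0)"
    and gint: "set_integrable lborel {0<..<1::real} g"
    and c: "0 < c" and e: "e < 0"
begin

lemma G_meas[measurable]: "(\<lambda>s. indicator {0<..<1::real} s * g s) \<in> borel_measurable lborel"
  using gint unfolding set_integrable_def by (simp add: borel_measurable_integrable)

lemma Q_eq: "indicator {0<..<1::real} s * (indicator (ball 0 ((c * g s) powr e)) (x::'a::euclidean_space) * g s)
   = (if norm x < (c * (indicator {0<..<1::real} s * g s)) powr e then indicator {0<..<1::real} s * g s else 0)"
  by (auto simp: indicator_def)

lemma Q_int: "set_integrable lborel {0<..<1::real} (\<lambda>s. indicator (ball 0 ((c * g s) powr e)) (x::'a::euclidean_space) * g s)"
  unfolding set_integrable_def
proof (rule Bochner_Integration.integrable_bound)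
  show "integrable lborel (\<lambda>s. indicator {0<..<1::real} s *\<^sub>R g s)" using gint unfolding set_integrable_def .
  show "(\<lambda>s. indicator {0<..<1::real} s *\<^sub>R (indicator (ball 0 ((c * g s) powr e)) x * g s)) \<in> borel_measurable lborel"
    unfolding real_scaleR_def Q_eq by measurable
  show "AE s in lborel. norm (indicator {0<..<1::real} s *\<^sub>R (indicator (ball 0 ((c * g s) powr e)) x * g s))
      \<le> norm (indicator {0<..<1::real} s *\<^sub>R g s)"
    by (rule AE_I2) (auto simp: indicator_def)
qed

lemma g_pos: "0 < s \<Longrightarrow> s < 1 \<Longrightarrow> 0 < g s"
  using gge[of s] g0 by linarith

lemma r_le: "0 < s \<Longrightarrow> s < 1 \<Longrightarrow> (c * g s) powr e \<le> (c * g0) powr e"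
  using gge[of s] g0 c e by (intro powr_mono2') auto

lemma r_lim: "((\<lambda>s. (c * g s) powr e) \<longlongrightarrow> (c * g0) powr e) (at_right 0)"
  using c g0 by (intro tendsto_intros glim) auto

lemma P_zero:
  assumes "(c * g0) powr e \<le> norm (x::'a::euclidean_space)"
  shows "(LINT s:{0<..<1}|lborel. indicator (ball 0 ((c * g s) powr e)) x * g s) = 0"
proof -
  have "(\<lambda>s. indicator {0<..<1::real} s *\<^sub>R (indicator (ball 0 ((c * g s) powr e)) x * g s)) = (\<lambda>s. 0)"
  proof (intro ext)
    fix s
    show "indicator {0<..<1::real} s *\<^sub>R (indicator (ball 0 ((c * g s) powr e)) x * g s) = 0"
    proof (cases "0 < s \<and> s < 1")
      case True
      then have "\<not> norm x < (c * g s) powr e" using r_le[of s] assms by linarith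
      then show ?thesis by (simp add: indicator_def)
    qed (simp add: indicator_def)
  qed
  then show ?thesis unfolding set_lebesgue_integral_def by simp
qed

lemma P_pos:
  assumes x: "norm (x::'a::euclidean_space) < (c * g0) powr e"
  shows "0 < (LINT s:{0<..<1}|lborel. indicator (ball 0 ((c * g s) powr e)) x * g s)"
proof -
  have "\<forall>\<^sub>F s in at_right 0. norm x < (c * g s) powr e"
    using order_tendstoD(1)[OF r_lim x] .
  then obtain b where b: "0 < b" "\<And>s. 0 < s \<Longrightarrow> s < b \<Longrightarrow> norm x < (c * g s) powr e"
    unfolding eventually_at_right_field by blast
  define b' where "b' = min b 1"
  have b': "0 < b'" "b' \<le> 1" using b by (auto simp: b'_def)
  have "(LINT s|lborel. indicator {0<..<b'} s * g0) \<le>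
      (LINT s|lborel. indicator {0<..<1::real} s *\<^sub>R (indicator (ball 0 ((c * g s) powr e)) x * g s))"
  proof (rule integral_mono)
    show "integrable lborel (\<lambda>s. indicator {0<..<b'} s * g0)"
      using b' by (intro integrable_mult_left) (simp add: integrable_indicator_iff emeasure_lborel_Ioo)
    show "integrable lborel (\<lambda>s. indicator {0<..<1::real} s *\<^sub>R (indicator (ball 0 ((c * g s) powr e)) x * g s))"
      using Q_int[of x] unfolding set_integrable_def .
    fix s
    show "indicator {0<..<b'} s * g0 \<le> indicator {0<..<1::real} s *\<^sub>R (indicator (ball 0 ((c * g s) powr e)) x * g s)"
    proof (cases "0 < s \<and> s < b'")
      case True
      then have "norm x < (c * g s) powr e" using b(2)[of s] by (auto simp: b'_def)
      then show ?thesis using True b' gge[of s] by (auto simp: indicator_def)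
    next
      case False
      then show ?thesis using g_pos[of s] by (auto simp: indicator_def)
    qed
  qed
  moreover have "(LINT s|lborel. indicator {0<..<b'} s * g0) = b' * g0"
    using b' by simp
  ultimately show ?thesis using b' g0 unfolding set_lebesgue_integral_def
    by (smt (verit) mult_pos_pos)
qed

lemma P_supp:
  "supp (\<lambda>x::'a::euclidean_space. LINT s:{0<..<1}|lborel. indicator (ball 0 ((c * g s) powr e)) x * g s)
    = cball 0 ((c * g0) powr e)"
proof -
  have "{x::'a. (LINT s:{0<..<1}|lborel. indicator (ball 0 ((c * g s) powr e)) x * g s) \<noteq> 0}
      = ball 0 ((c * g0) powr e)"
  proof (intro set_eqI iffI)
    fix x :: 'a
    assume "x \<in> {x. (LINT s:{0<..<1}|lborel. indicator (ball 0 ((c * g s) powr e)) x * g s) \<noteq> 0}"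
    then show "x \<in> ball 0 ((c * g0) powr e)" using P_zero[of x] by (auto simp: not_le[symmetric])
  next
    fix x :: 'a assume "x \<in> ball 0 ((c * g0) powr e)"
    then show "x \<in> {x. (LINT s:{0<..<1}|lborel. indicator (ball 0 ((c * g s) powr e)) x * g s) \<noteq> 0}"
      using P_pos[of x] by auto
  qed
  moreover have "0 < (c * g0) powr e" using c g0 by simp
  ultimately show ?thesis unfolding supp_def by simp
qed


lemma Q_alt: "indicator (ball 0 r) (x::'a::euclidean_space) * (w::real) = (if norm x < r then w else 0)"
  by (simp add: indicator_def)


lemma P_strict:
  fixes x y :: "'a::euclidean_space"
  assumes gcont: "\<And>s. 0 < s \<Longrightarrow> s < 1 \<Longrightarrow> isCont g s"
    and gunb: "\<And>K. \<exists>s. 0 < s \<and> s < 1 \<and> K < g s"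
    and xy: "norm x < norm y" "norm y \<le> (c * g0) powr e"
  shows "(LINT s:{0<..<1}|lborel. indicator (ball 0 ((c * g s) powr e)) y * g s)
       < (LINT s:{0<..<1}|lborel. indicator (ball 0 ((c * g s) powr e)) x * g s)"
proof -
  define r where "r s = (c * g s) powr e" for s
  define a where "a = norm x"
  define b where "b = norm y"
  define mid where "mid = (a + b) / 2"
  have ab: "0 \<le> a" "a < mid" "mid < b" "b \<le> (c * g0) powr e" using xy by (auto simp: a_def b_def mid_def)
  have rc: "isCont r s" if "0 < s" "s < 1" for s
  proof -
    have "0 < g s" using g_pos that by blast
    then show ?thesis unfolding r_def using gcont[OF that] c by (intro continuous_intros) auto
  qed
  have ranti: "r s' \<le> r s" if "0 < s" "s \<le> s'" "s' < 1" for s s'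
    unfolding r_def using gmono[OF that] g_pos[of s] c e that by (intro powr_mono2') auto
  have "\<forall>\<^sub>F s in at_right 0. mid < r s"
    unfolding r_def using order_tendstoD(1)[OF r_lim] ab by simp
  moreover have "\<forall>\<^sub>F s in at_right (0::real). 0 < s \<and> s < 1"
    unfolding eventually_at_right_field by (intro exI[of _ 1]) auto
  ultimately have "\<forall>\<^sub>F s in at_right (0::real). 0 < s \<and> s < 1 \<and> mid < r s"
    by eventually_elim auto
  then obtain sa where sa: "0 < sa" "sa < 1" "mid < r sa"
    using eventually_happens'[OF trivial_limit_at_right_real] by blast
  define K where "K = mid powr (1 / e) / c + 1"
  obtain sb where sb: "0 < sb" "sb < 1" "K < g sb" using gunb by blast
  have midp: "0 < mid" using ab by simp
  have "mid powr (1 / e) < c * g sb"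
  proof -
    have "mid powr (1 / e) < c * K" unfolding K_def using c by (simp add: field_simps)
    also have "\<dots> < c * g sb" using c sb by simp
    finally show ?thesis .
  qed
  then have "r sb < (mid powr (1 / e)) powr e"
    unfolding r_def using e midp by (intro powr_less_mono2_neg) auto
  also have "(mid powr (1 / e)) powr e = mid" using e midp by (simp add: powr_powr)
  finally have rsb: "r sb < mid" .
  have sab: "sa < sb"
  proof (rule ccontr)
    assume "\<not> sa < sb"
    then have "r sa \<le> r sb" using ranti[of sb sa] sa sb by auto
    then show False using sa rsb by simp
  qed
  have "continuous_on {sa..sb} r"
    using sa sb by (intro continuous_at_imp_continuous_on ballI rc) auto
  then obtain st where st: "sa \<le> st" "st \<le> sb" "r st = mid"
    using IVT2'[of r sb mid sa] rsb sa sab by auto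
  have st01: "0 < st" "st < 1" using st sa sb by auto
  obtain d where d: "0 < d" "\<And>s. dist s st < d \<Longrightarrow> dist (r s) (r st) < (b - a) / 2"
    using rc[OF st01] ab unfolding continuous_at_eps_delta
    by (metis diff_gt_0_iff_gt divide_pos_pos less_trans zero_less_numeral)
  define d' where "d' = min d (min st (1 - st))"
  have d': "0 < d'" "d' \<le> d" "d' \<le> st" "d' \<le> 1 - st" using d st01 by (auto simp: d'_def)
  define I where "I = {st - d'<..<st + d'}"
  have I01: "s \<in> I \<Longrightarrow> 0 < s \<and> s < 1" for s using d' by (auto simp: I_def)
  have Ir: "s \<in> I \<Longrightarrow> a < r s \<and> r s < b" for s
  proof -
    assume s: "s \<in> I"
    then have "dist s st < d" using d' by (auto simp: I_def dist_real_def abs_less_iff)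
    then have "dist (r s) mid < (b - a) / 2" using d(2)[of s] st by simp
    then show "a < r s \<and> r s < b" unfolding mid_def dist_real_def by (auto simp: abs_less_iff field_simps)
  qed
  define Fx where "Fx s = indicator {0<..<1::real} s *\<^sub>R (indicator (ball 0 ((c * g s) powr e)) x * g s)" for s
  define Fy where "Fy s = indicator {0<..<1::real} s *\<^sub>R (indicator (ball 0 ((c * g s) powr e)) y * g s)" for s
  have iFx: "integrable lborel Fx" using Q_int[of x] unfolding set_integrable_def Fx_def .
  have iFy: "integrable lborel Fy" using Q_int[of y] unfolding set_integrable_def Fy_def .
  have iI: "integrable lborel (\<lambda>s. indicator I s * g0)"
    using d' by (intro integrable_mult_left) (simp add: I_def integrable_indicator_iff emeasure_lborel_Ioo)
  have MO: "(LINT s|lborel. indicator I s * g0) \<le> (LINT s|lborel. Fx s - Fy s)"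
  proof (rule integral_mono[OF iI Bochner_Integration.integrable_diff[OF iFx iFy]])
    fix s
    show "indicator I s * g0 \<le> Fx s - Fy s"
    proof (cases "s \<in> I")
      case True
      then have "0 < s" "s < 1" "a < r s" "\<not> b < r s" using I01[OF True] Ir[OF True] by auto
      then show ?thesis using gge[of s] True unfolding Fx_def Fy_def Q_alt r_def a_def b_def
        by (simp add: indicator_def)
    next
      case False
      have "Fy s \<le> Fx s"
        unfolding Fx_def Fy_def Q_alt using g_pos[of s] xy(1)
        by (auto simp: indicator_def)
      then show ?thesis using False by simp
    qed
  qed
  have E1: "(LINT s|lborel. indicator I s * g0) = 2 * d' * g0"
    using d' by (simp add: I_def)
  have E2: "(LINT s|lborel. Fx s - Fy s) = (LINT s|lborel. Fx s) - (LINT s|lborel. Fy s)"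
    using iFx iFy by (rule Bochner_Integration.integral_diff)
  have "2 * d' * g0 \<le> (LINT s|lborel. Fx s) - (LINT s|lborel. Fy s)" using MO E1 E2 by linarith
  moreover have "0 < 2 * d' * g0" using d' g0 by simp
  ultimately show ?thesis unfolding set_lebesgue_integral_def Fx_def Fy_def by simp
qed


lemma P_cont:
  assumes gstr: "\<And>s s'. 0 < s \<Longrightarrow> s < s' \<Longrightarrow> s' < 1 \<Longrightarrow> g s < g s'"
  shows "continuous_on UNIV (\<lambda>x::'a::euclidean_space. LINT s:{0<..<1}|lborel. indicator (ball 0 ((c * g s) powr e)) x * g s)"
proof -
  define r where "r s = (c * g s) powr e" for s
  define \<Phi> where "\<Phi> v = (LINT s|lborel. indicator {0<..<1::real} s *\<^sub>R (if v < r s then g s else 0))" for v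
  have eqP: "(\<lambda>x::'a. LINT s:{0<..<1}|lborel. indicator (ball 0 ((c * g s) powr e)) x * g s) = (\<lambda>x. \<Phi> (norm x))"
    unfolding \<Phi>_def set_lebesgue_integral_def r_def Q_alt by simp
  have Gm[measurable]: "(\<lambda>s. indicator {0<..<1::real} s * g s) \<in> borel_measurable lborel" by (rule G_meas)
  have meas: "(\<lambda>s. indicator {0<..<1::real} s *\<^sub>R (if v < r s then g s else 0)) \<in> borel_measurable lborel" for v
  proof -
    have "(\<lambda>s. indicator {0<..<1::real} s *\<^sub>R (if v < r s then g s else 0)) =
        (\<lambda>s. if v < (c * (indicator {0<..<1::real} s * g s)) powr e then indicator {0<..<1::real} s * g s else 0)"
      unfolding r_def by (rule ext) (simp add: indicator_def)
    also have "\<dots> \<in> borel_measurable lborel" by measurable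
    finally show ?thesis .
  qed
  have wint: "integrable lborel (\<lambda>s. indicator {0<..<1::real} s *\<^sub>R g s)"
    using gint unfolding set_integrable_def .
  have rinj: "s1 = s2" if "0 < s1" "s1 < 1" "0 < s2" "s2 < 1" "r s1 = r s2" for s1 s2
  proof (rule ccontr)
    assume "s1 \<noteq> s2"
    then consider "s1 < s2" | "s2 < s1" by linarith
    then show False
    proof cases
      case 1
      have "r s2 < r s1" unfolding r_def using gstr[OF that(1) 1 that(4)] g_pos[OF that(1,2)] c e
        by (intro powr_less_mono2_neg) auto
      then show False using that by simp
    next
      case 2
      have "r s1 < r s2" unfolding r_def using gstr[OF that(3) 2 that(2)] g_pos[OF that(3,4)] c e
        by (intro powr_less_mono2_neg) auto
      then show False using that by simp
    qed
  qed
  have cont: "isCont \<Phi> v" for v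
    unfolding continuous_at_sequentially comp_def
  proof (intro allI impI)
    fix X :: "nat \<Rightarrow> real" assume X: "X \<longlonglongrightarrow> v"
    define Z where "Z = {s \<in> {0<..<1::real}. r s = v}"
    have Zc: "countable Z"
    proof (cases "Z = {}")
      case False
      then obtain s0 where s0: "s0 \<in> Z" by auto
      have "Z \<subseteq> {s0}" using s0 rinj unfolding Z_def by auto
      then show ?thesis by (rule countable_subset) simp
    qed simp
    have "AE s in lborel. s \<notin> Z" by (rule AE_not_in[OF countable_imp_null_set_lborel[OF Zc]])
    then have lim: "AE s in lborel. (\<lambda>i. indicator {0<..<1::real} s *\<^sub>R (if X i < r s then g s else 0))
        \<longlonglongrightarrow> indicator {0<..<1::real} s *\<^sub>R (if v < r s then g s else 0)"
    proof eventually_elim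
      fix s assume s: "s \<notin> Z"
      show "(\<lambda>i. indicator {0<..<1::real} s *\<^sub>R (if X i < r s then g s else 0))
        \<longlonglongrightarrow> indicator {0<..<1::real} s *\<^sub>R (if v < r s then g s else 0)"
      proof (cases "s \<in> {0<..<1}")
        case False then show ?thesis by simp
      next
        case True
        then have "r s \<noteq> v" using s unfolding Z_def by auto
        then consider "v < r s" | "r s < v" by linarith
        then show ?thesis
        proof cases
          case 1
          have "\<forall>\<^sub>F i in sequentially. X i < r s" using order_tendstoD(2)[OF X 1] .
          then have "\<forall>\<^sub>F i in sequentially. indicator {0<..<1::real} s *\<^sub>R (if X i < r s then g s else 0)
              = indicator {0<..<1::real} s *\<^sub>R (if v < r s then g s else 0)"
            by eventually_elim (use 1 in simp)
          then show ?thesis by (rule tendsto_eventually)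
        next
          case 2
          have "\<forall>\<^sub>F i in sequentially. r s < X i" using order_tendstoD(1)[OF X 2] .
          then have "\<forall>\<^sub>F i in sequentially. indicator {0<..<1::real} s *\<^sub>R (if X i < r s then g s else 0)
              = indicator {0<..<1::real} s *\<^sub>R (if v < r s then g s else 0)"
            by eventually_elim (use 2 in auto)
          then show ?thesis by (rule tendsto_eventually)
        qed
      qed
    qed
    have bound: "AE s in lborel. norm (indicator {0<..<1::real} s *\<^sub>R (if X i < r s then g s else 0))
        \<le> indicator {0<..<1::real} s *\<^sub>R g s" for i
      by (rule AE_I2) (auto simp: indicator_def dest: g_pos)
    show "(\<lambda>i. \<Phi> (X i)) \<longlonglongrightarrow> \<Phi> v"
      unfolding \<Phi>_def by (rule integral_dominated_convergence[OF meas meas wint lim bound])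
  qed
  have "continuous_on UNIV (\<lambda>x::'a. \<Phi> (norm x))"
    by (rule continuous_on_compose2[of UNIV \<Phi>]) (auto intro: continuous_at_imp_continuous_on cont continuous_intros)
  then show ?thesis unfolding eqP .
qed

end



definition "pf \<rho> s = 1 / mlev \<rho> (height \<rho> s)"

definition "goodrho (\<rho>::'a::euclidean_space \<Rightarrow> real) R \<longleftrightarrow> (\<forall>x. 0 \<le> \<rho> x) \<and> integrable lborel \<rho> \<and>
   (LINT x|lborel. \<rho> x) = 1 \<and> radially_decreasing \<rho> \<and> supp \<rho> = cball 0 R"

lemma goodrhoD:
  assumes "goodrho \<rho> R"
  shows "\<And>x. 0 \<le> \<rho> x" "integrable lborel \<rho>" "(LINT x|lborel. \<rho> x) = 1" "radially_decreasing \<rho>" "supp \<rho> = cball 0 R"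
  using assms unfolding goodrho_def by auto

lemma goodrhoI:
  assumes "prob_density \<rho>" "radially_decreasing \<rho>" "supp \<rho> = cball 0 R"
  shows "goodrho \<rho> R"
  using assms unfolding goodrho_def prob_density_def by auto

lemmas gr = goodrhoD(1) goodrhoD(2) goodrhoD(3) goodrhoD(4) goodrhoD(5)

lemma interp_eq:
  fixes \<rho>0 \<rho>1 :: "'a::euclidean_space \<Rightarrow> real"
  assumes G0: "goodrho \<rho>0 R0" and G1: "goodrho \<rho>1 R1" and t: "0 < t" "t < 1"
  shows "interp_curve \<rho>0 \<rho>1 t x =
    (LINT s:{0<..<1}|lborel. indicator (ball 0 ((measure lborel (ball (0::'a) 1) * ((1 - t) * pf \<rho>0 s + t * pf \<rho>1 s)) powr (-1 / real DIM('a)))) x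
        * ((1 - t) * pf \<rho>0 s + t * pf \<rho>1 s))"
proof -
  let ?c = "measure lborel (ball (0::'a) 1)"
  let ?e = "-1 / real DIM('a)"
  let ?ht = "\<lambda>s. (1 - t) * height \<rho>0 s + t * height \<rho>1 s"
  let ?g = "\<lambda>s. (1 - t) * pf \<rho>0 s + t * pf \<rho>1 s"
  define X where "X = Ebad \<rho>0 \<union> Ebad \<rho>1"
  have X: "countable X" unfolding X_def
    using Ebad_countable[OF gr[OF G0]] Ebad_countable[OF gr[OF G1]] by simp
  have der: "deriv ?ht s = ?g s" if "s \<in> {0<..<1} - X" for s
  proof -
    have d0: "(height \<rho>0 has_field_derivative pf \<rho>0 s) (at s)"
      using h_deriv_ae[OF gr[OF G0], of s] that unfolding pf_def X_def by auto
    have d1: "(height \<rho>1 has_field_derivative pf \<rho>1 s) (at s)"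
      using h_deriv_ae[OF gr[OF G1], of s] that unfolding pf_def X_def by auto
    have "(?ht has_field_derivative ?g s) (at s)"
      by (intro DERIV_add DERIV_cmult d0 d1)
    then show ?thesis by (rule DERIV_imp_deriv)
  qed
  define F1 where "F1 s = indicator {0<..<1::real} s *\<^sub>R (indicator (ball 0 ((?c * ?g s) powr ?e)) x * ?g s)" for s
  define F2 where "F2 s = indicator {0<..<1::real} s *\<^sub>R (indicator (ball 0 ((?c * deriv ?ht s) powr ?e)) x * deriv ?ht s)" for s
  have eq: "F1 s = F2 s" if "s \<notin> X" for s
  proof (cases "s \<in> {0<..<1}")
    case True then show ?thesis using der[of s] that unfolding F1_def F2_def by simp
  next
    case False then show ?thesis unfolding F1_def F2_def by simp
  qed
  have gint: "set_integrable lborel {0<..<1::real} ?g"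
    using p_set_int[OF gr[OF G0]] p_set_int[OF gr[OF G1]] unfolding pf_def
    by (intro set_integral_add set_integrable_mult_right) auto
  have F1m: "F1 \<in> borel_measurable lborel"
  proof -
    have Gm[measurable]: "(\<lambda>s. indicator {0<..<1::real} s * ?g s) \<in> borel_measurable lborel"
      using gint unfolding set_integrable_def by (simp add: borel_measurable_integrable)
    have "F1 = (\<lambda>s. if norm x < (?c * (indicator {0<..<1::real} s * ?g s)) powr ?e then indicator {0<..<1::real} s * ?g s else 0)"
      unfolding F1_def by (rule ext) (simp add: indicator_def)
    also have "\<dots> \<in> borel_measurable lborel" by measurable
    finally show ?thesis .
  qed
  have F2m: "F2 \<in> borel_measurable lborel"
    by (rule measurable_discrete_difference[OF F1m X]) (auto simp: eq)
  have "integral\<^sup>L lborel F2 = integral\<^sup>L lborel F1"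
  proof (rule integral_cong_AE[OF F2m F1m])
    have "X \<in> null_sets lborel" using X by (rule countable_imp_null_set_lborel)
    then show "AE s in lborel. F2 s = F1 s"
      by (rule AE_I') (use eq in \<open>auto simp: eq_commute\<close>)
  qed
  then show ?thesis
    unfolding interp_curve_def Let_def set_lebesgue_integral_def F1_def F2_def by simp
qed




lemma Rt_le_max:
  fixes R0 R1 t n :: real
  assumes R: "0 < R0" "0 < R1" and t: "0 \<le> t" "t \<le> 1" and n: "0 < n"
  shows "((1 - t) * R0 powr (- n) + t * R1 powr (- n)) powr (-1 / n) \<le> max R0 R1"
proof -
  define M where "M = max R0 R1"
  have M: "0 < M" "R0 \<le> M" "R1 \<le> M" using R by (auto simp: M_def)
  have a: "M powr (- n) \<le> R0 powr (- n)" using M R n by (intro powr_mono2') auto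
  have b: "M powr (- n) \<le> R1 powr (- n)" using M R n by (intro powr_mono2') auto
  have "M powr (- n) = (1 - t) * M powr (- n) + t * M powr (- n)" by (simp add: algebra_simps)
  also have "\<dots> \<le> (1 - t) * R0 powr (- n) + t * R1 powr (- n)"
    using a b t by (intro add_mono mult_left_mono) auto
  finally have S: "M powr (- n) \<le> (1 - t) * R0 powr (- n) + t * R1 powr (- n)" .
  have "((1 - t) * R0 powr (- n) + t * R1 powr (- n)) powr (-1 / n) \<le> (M powr (- n)) powr (-1 / n)"
    using S M n by (intro powr_mono2') auto
  also have "\<dots> = M" using n M by (simp add: powr_powr)
  finally show ?thesis by (simp add: M_def)
qed

lemma c_eq: "measure lborel (ball (0::'a::euclidean_space) 1) = unit_ball_vol (real DIM('a))"
  using content_ball[of 1 "0::'a"] by simp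

definition "gfun \<rho>0 \<rho>1 t s = (1 - t) * pf \<rho>0 s + t * pf \<rho>1 s"

definition "g0c cv (n::nat) R0 R1 t = (1 - t) * (1 / (cv * R0 ^ n)) + t * (1 / (cv * R1 ^ n))"

lemma g_facts:
  fixes \<rho>0 \<rho>1 :: "'a::euclidean_space \<Rightarrow> real"
  assumes G0: "goodrho \<rho>0 R0" and G1: "goodrho \<rho>1 R1" and t: "0 < t" "t < 1"
  shows "0 < g0c (unit_ball_vol (real DIM('a))) DIM('a) R0 R1 t"
    and "\<And>s. 0 < s \<Longrightarrow> s < 1 \<Longrightarrow> g0c (unit_ball_vol (real DIM('a))) DIM('a) R0 R1 t \<le> gfun \<rho>0 \<rho>1 t s"
    and "\<And>s s'. 0 < s \<Longrightarrow> s \<le> s' \<Longrightarrow> s' < 1 \<Longrightarrow> gfun \<rho>0 \<rho>1 t s \<le> gfun \<rho>0 \<rho>1 t s'"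
    and "(gfun \<rho>0 \<rho>1 t \<longlongrightarrow> g0c (unit_ball_vol (real DIM('a))) DIM('a) R0 R1 t) (at_right 0)"
    and "set_integrable lborel {0<..<1::real} (gfun \<rho>0 \<rho>1 t)"
    and "0 < measure lborel (ball (0::'a) 1)"
    and "-1 / real DIM('a) < 0"
proof -
  let ?n = "DIM('a)"
  let ?cv = "unit_ball_vol (real DIM('a))"
  have R0: "0 < R0" using R_pos[OF gr[OF G0]] .
  have R1: "0 < R1" using R_pos[OF gr[OF G1]] .
  have cv: "0 < ?cv" by simp
  show "0 < g0c ?cv ?n R0 R1 t" unfolding g0c_def using t cv R0 R1 by (intro add_pos_pos mult_pos_pos) auto
  show "g0c ?cv ?n R0 R1 t \<le> gfun \<rho>0 \<rho>1 t s" if "0 < s" "s < 1" for s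
    unfolding g0c_def gfun_def pf_def using t p_ge[OF gr[OF G0] that] p_ge[OF gr[OF G1] that]
    by (intro add_mono mult_left_mono) auto
  show "gfun \<rho>0 \<rho>1 t s \<le> gfun \<rho>0 \<rho>1 t s'" if "0 < s" "s \<le> s'" "s' < 1" for s s'
    unfolding gfun_def pf_def using t p_mono[OF gr[OF G0] that] p_mono[OF gr[OF G1] that]
    by (intro add_mono mult_left_mono) auto
  show "(gfun \<rho>0 \<rho>1 t \<longlongrightarrow> g0c ?cv ?n R0 R1 t) (at_right 0)"
    unfolding g0c_def gfun_def pf_def
    by (rule tendsto_add[OF tendsto_mult_left[OF p_lim0[OF gr[OF G0]]] tendsto_mult_left[OF p_lim0[OF gr[OF G1]]]])
  show "set_integrable lborel {0<..<1::real} (gfun \<rho>0 \<rho>1 t)"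
    using p_set_int[OF gr[OF G0]] p_set_int[OF gr[OF G1]] unfolding gfun_def pf_def
    by (intro set_integral_add set_integrable_mult_right) auto
  show "0 < measure lborel (ball (0::'a) 1)" using c_eq[where 'a='a] cv by simp
  show "-1 / real DIM('a) < 0" by simp
qed

lemma IE:
  fixes \<rho>0 \<rho>1 :: "'a::euclidean_space \<Rightarrow> real"
  assumes G0: "goodrho \<rho>0 R0" and G1: "goodrho \<rho>1 R1" and t: "0 < t" "t < 1"
  shows "interp_curve \<rho>0 \<rho>1 t = (\<lambda>x. LINT s:{0<..<1}|lborel.
     indicator (ball 0 ((measure lborel (ball (0::'a) 1) * gfun \<rho>0 \<rho>1 t s) powr (-1 / real DIM('a)))) x * gfun \<rho>0 \<rho>1 t s)"
  using interp_eq[OF G0 G1 t] unfolding gfun_def by (intro ext) simp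

lemma CG:
  fixes \<rho>0 \<rho>1 :: "'a::euclidean_space \<Rightarrow> real"
  assumes G0: "goodrho \<rho>0 R0" and G1: "goodrho \<rho>1 R1"
  shows "(measure lborel (ball (0::'a) 1) * g0c (unit_ball_vol (real DIM('a))) DIM('a) R0 R1 t) powr (-1 / real DIM('a))
     = ((1 - t) * R0 powr (- real DIM('a)) + t * R1 powr (- real DIM('a))) powr (-1 / real DIM('a))"
proof -
  let ?n = "DIM('a)"
  let ?cv = "unit_ball_vol (real DIM('a))"
  have R0: "0 < R0" using R_pos[OF gr[OF G0]] .
  have R1: "0 < R1" using R_pos[OF gr[OF G1]] .
  have cv: "0 < ?cv" by simp
  have cvne: "?cv \<noteq> 0" using cv by (metis less_irrefl)
  have E0: "R0 powr (- real DIM('a)) = 1 / R0 ^ ?n" and E1: "R1 powr (- real DIM('a)) = 1 / R1 ^ ?n"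
    using R0 R1 by (simp_all add: powr_minus powr_realpow divide_inverse)
  have "measure lborel (ball (0::'a) 1) * g0c ?cv ?n R0 R1 t = (1 - t) * R0 powr (- real DIM('a)) + t * R1 powr (- real DIM('a))"
    unfolding g0c_def c_eq E0 E1 using cvne R0 R1 by (simp add: field_simps)
  then show ?thesis by simp
qed

lemma partA:
  fixes \<rho>0 \<rho>1 :: "'a::euclidean_space \<Rightarrow> real"
  assumes G0: "goodrho \<rho>0 R0" and G1: "goodrho \<rho>1 R1" and t: "0 < t" "t < 1"
  shows "supp (interp_curve \<rho>0 \<rho>1 t) =
     cball 0 (((1 - t) * R0 powr (- real DIM('a)) + t * R1 powr (- real DIM('a))) powr (-1 / real DIM('a)))"
  unfolding IE[OF G0 G1 t] CG[OF G0 G1, symmetric] by (rule P_supp[OF g_facts[OF G0 G1 t]])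

lemma partB:
  fixes \<rho>0 \<rho>1 :: "'a::euclidean_space \<Rightarrow> real"
  assumes G0: "goodrho \<rho>0 R0" and G1: "goodrho \<rho>1 R1" and t: "0 < t" "t < 1"
    and S0: "strictly_radially_decreasing_on_supp \<rho>0" and S1: "strictly_radially_decreasing_on_supp \<rho>1"
  shows "strictly_radially_decreasing_on_supp (interp_curve \<rho>0 \<rho>1 t)"
  unfolding strictly_radially_decreasing_on_supp_def
proof (intro allI impI)
  fix x y :: 'a
  assume xy: "norm x < norm y" and ys: "y \<in> supp (interp_curve \<rho>0 \<rho>1 t)"
  have yle: "norm y \<le> (measure lborel (ball (0::'a) 1) * g0c (unit_ball_vol (real DIM('a))) DIM('a) R0 R1 t) powr (-1 / real DIM('a))"
    using ys unfolding partA[OF G0 G1 t] CG[OF G0 G1] by simp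
  have gcont: "isCont (gfun \<rho>0 \<rho>1 t) s" if "0 < s" "s < 1" for s
    unfolding gfun_def pf_def
    by (rule continuous_add[OF continuous_mult[OF continuous_const srd_p_cont[OF gr[OF G0] S0 that]]
          continuous_mult[OF continuous_const srd_p_cont[OF gr[OF G1] S1 that]]])
  have gunb: "\<exists>s. 0 < s \<and> s < 1 \<and> K < gfun \<rho>0 \<rho>1 t s" for K
  proof -
    define K' where "K' = \<bar>K\<bar> / (1 - t) + 1"
    have K': "0 < K'" using t by (simp add: K'_def add_nonneg_pos)
    obtain s where s: "0 < s" "s < 1" "K' < pf \<rho>0 s"
      using srd_p_unbounded[OF gr[OF G0] S0 K'] unfolding pf_def by blast
    have "(1 - t) * K' < (1 - t) * pf \<rho>0 s" using s t by simp
    moreover have "\<bar>K\<bar> \<le> (1 - t) * K'"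
    proof -
      have "(1 - t) * K' = \<bar>K\<bar> + (1 - t)" using t by (simp add: K'_def field_simps)
      then show ?thesis using t by linarith
    qed
    moreover have "0 \<le> t * pf \<rho>1 s" using t p_pos[OF gr[OF G1] s(1,2)] unfolding pf_def by simp
    ultimately have "K < gfun \<rho>0 \<rho>1 t s" unfolding gfun_def by linarith
    then show ?thesis using s by blast
  qed
  show "interp_curve \<rho>0 \<rho>1 t y < interp_curve \<rho>0 \<rho>1 t x"
    unfolding IE[OF G0 G1 t]
    by (rule P_strict[OF g_facts[OF G0 G1 t] gcont gunb xy yle]) auto
qed

lemma partC:
  fixes \<rho>0 \<rho>1 :: "'a::euclidean_space \<Rightarrow> real"
  assumes G0: "goodrho \<rho>0 R0" and G1: "goodrho \<rho>1 R1" and t: "0 < t" "t < 1"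
    and C0: "continuous_on UNIV \<rho>0" and C1: "continuous_on UNIV \<rho>1"
  shows "continuous_on UNIV (interp_curve \<rho>0 \<rho>1 t)"
  unfolding IE[OF G0 G1 t]
proof (rule P_cont[OF g_facts[OF G0 G1 t]])
  fix s s' :: real assume ss: "0 < s" "s < s'" "s' < 1"
  have "pf \<rho>0 s < pf \<rho>0 s'" unfolding pf_def by (rule cont_p_strict[OF gr[OF G0] C0 ss])
  moreover have "pf \<rho>1 s < pf \<rho>1 s'" unfolding pf_def by (rule cont_p_strict[OF gr[OF G1] C1 ss])
  ultimately show "gfun \<rho>0 \<rho>1 t s < gfun \<rho>0 \<rho>1 t s'"
    unfolding gfun_def using t by (intro add_strict_mono mult_strict_left_mono) auto
qed

theorem lemma4p1:
  fixes \<rho>0 \<rho>1 :: "'a::euclidean_space \<Rightarrow> real"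
    and R0 R1 :: real
  assumes pd0: "prob_density \<rho>0" and pd1: "prob_density \<rho>1"
    and lin0: "ess_bounded \<rho>0" and lin1: "ess_bounded \<rho>1"
    and rd0: "radially_decreasing \<rho>0" and rd1: "radially_decreasing \<rho>1"
    and cs0: "compact (supp \<rho>0)" and cs1: "compact (supp \<rho>1)"
    and R0: "supp \<rho>0 = cball 0 R0" and R1: "supp \<rho>1 = cball 0 R1"
  shows
    "(\<forall>t\<in>{0<..<1}. supp (interp_curve \<rho>0 \<rho>1 t) =
        cball 0 (((1 - t) * R0 powr (- real DIM('a)) + t * R1 powr (- real DIM('a)))
                   powr (-1 / real DIM('a))))
     \<and> (\<forall>t\<in>{0..1}. ((1 - t) * R0 powr (- real DIM('a)) + t * R1 powr (- real DIM('a)))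
                   powr (-1 / real DIM('a)) \<le> max R0 R1)
     \<and> (strictly_radially_decreasing_on_supp \<rho>0 \<and> strictly_radially_decreasing_on_supp \<rho>1 \<longrightarrow>
          (\<forall>t\<in>{0<..<1}. strictly_radially_decreasing_on_supp (interp_curve \<rho>0 \<rho>1 t)))
     \<and> (continuous_on UNIV \<rho>0 \<and> continuous_on UNIV \<rho>1 \<longrightarrow>
          (\<forall>t\<in>{0<..<1}. continuous_on UNIV (interp_curve \<rho>0 \<rho>1 t)))"
proof -
  have G0: "goodrho \<rho>0 R0" by (rule goodrhoI[OF pd0 rd0 R0])
  have G1: "goodrho \<rho>1 R1" by (rule goodrhoI[OF pd1 rd1 R1])
  have Rp0: "0 < R0" using R_pos[OF gr[OF G0]] .
  have Rp1: "0 < R1" using R_pos[OF gr[OF G1]] .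
  show ?thesis
  proof (intro conjI ballI impI)
    fix t :: real assume "t \<in> {0<..<1}"
    then show "supp (interp_curve \<rho>0 \<rho>1 t) =
        cball 0 (((1 - t) * R0 powr (- real DIM('a)) + t * R1 powr (- real DIM('a))) powr (-1 / real DIM('a)))"
      using partA[OF G0 G1] by auto
  next
    fix t :: real assume "t \<in> {0..1}"
    then show "((1 - t) * R0 powr (- real DIM('a)) + t * R1 powr (- real DIM('a))) powr (-1 / real DIM('a)) \<le> max R0 R1"
      using Rt_le_max[OF Rp0 Rp1, of t "real DIM('a)"] by auto
  next
    fix t :: real assume "strictly_radially_decreasing_on_supp \<rho>0 \<and> strictly_radially_decreasing_on_supp \<rho>1" "t \<in> {0<..<1}"
    then show "strictly_radially_decreasing_on_supp (interp_curve \<rho>0 \<rho>1 t)"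
      using partB[OF G0 G1] by auto
  next
    fix t :: real assume "continuous_on UNIV \<rho>0 \<and> continuous_on UNIV \<rho>1" "t \<in> {0<..<1}"
    then show "continuous_on UNIV (interp_curve \<rho>0 \<rho>1 t)"
      using partC[OF G0 G1] by auto
  qed
qed


end
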